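(* Let $B$ be a finite set and consider the monoid $J(\emptyset,B)$. Let $X_n$, $n\in\mathbb{N}$, be pointed $J(\emptyset,B)$-sets, and let $E$ be a right ideal in $\langle(X_n)\rangle$ such that $\langle(X_n)\rangle$ is $E$-directed. Then for each coloring of $\langle(X_n)\rangle$ with finitely many colors there exists a basic double sequence $(v_i,v'_i)$ in $\langle(X_n)\rangle$ such that each $v_i$ has as an entry the distinguished point of some $X_n$, $v'_i\in E$ for each $i$, and the coloring is constant on all elements of the form $b_0(v_{i_0})b'_0(v'_{j_0})b_1(v_{i_1})b'_1(v'_{j_1})\cdots b_n(v_{i_n})$ with $b_0,b'_0,b_1,b'_1,\dots,b_n\in B$ and $i_0\le j_0<i_1\le j_1<\cdots<i_n$.
   Context: $J(\emptyset,B)=\{1\}\cup B$ ($1\notin B$) is the monoid with identity $1$ and $c\cdot b=b$ for all $c\in J(\emptyset,B)$, $b\in B$. Monoid actions have the identity acting as the identity. A pointed $M$-set is a set $X$ with an $M$-action and a distinguished point $x$ with $Mx=X$. For a sequence of sets $(X_n)$, $\langle(X_n)\rangle$ is the set of finite sequences $x_1\cdots x_k$ ($k\in\mathbb{N}$) such that there are $m_1<\cdots<m_k$ with $x_i\in X_{m_i}$; it is a partial semigroup: the product of $x_1\cdots x_k$ and $y_1\cdots y_l$ is defined iff there are $m_1<\cdots<m_k<n_1<\cdots<n_l$ with $x_i\in X_{m_i}$, $y_j\in X_{n_j}$, and equals the concatenation. $M$ acts by $a(x_1\cdots x_k)=a(x_1)\cdots a(x_k)$. A right ideal in $\langle(X_n)\rangle$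 is a non-empty $E$ with $wu\in E$ whenever $w\in E$ and $wu$ is defined; $\langle(X_n)\rangle$ is $E$-directed if for all $u_1,\dots,u_n$ there is $u\in E$ with all $u_iu$ defined. A double sequence $(v_i,v'_i)$ is basic if the single sequence $v_0,v'_0,v_1,v'_1,\dots$ is basic, i.e. the product of any finite subsequence taken in order is defined. *)

theory Defs
  imports Main
begin

text \<open>Elements of J(empty,B) are encoded as 'b option: None is the identity 1,
  Some b is the element b of B. The carrier is None together with Some ` B.\<close>

definition Jcarrier :: "'b set \<Rightarrow> 'b option set" where
  "Jcarrier B = insert None (Some ` B)"

definition jmult :: "'b option \<Rightarrow> 'b option \<Rightarrow> 'b option" where
  "jmult a c = (case c of None \<Rightarrow> a | Some b \<Rightarrow> Some b)"

definition is_J_action :: "'b set \<Rightarrow> 'x set \<Rightarrow> ('b option \<Rightarrow> 'x \<Rightarrow> 'x) \<Rightarrow> bool" where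
  "is_J_action B X act \<longleftrightarrow>
     (\<forall>a\<in>Jcarrier B. \<forall>x\<in>X. act a x \<in> X) \<and>
     (\<forall>x\<in>X. act None x = x) \<and>
     (\<forall>a\<in>Jcarrier B. \<forall>c\<in>Jcarrier B. \<forall>x\<in>X. act a (act c x) = act (jmult a c) x)"

definition pointed_J_set :: "'b set \<Rightarrow> 'x set \<Rightarrow> ('b option \<Rightarrow> 'x \<Rightarrow> 'x) \<Rightarrow> 'x \<Rightarrow> bool" where
  "pointed_J_set B X act p \<longleftrightarrow>
     is_J_action B X act \<and> p \<in> X \<and> (\<lambda>a. act a p) ` Jcarrier B = X"

text \<open>An entry x_i of X_(m_i) is recorded together with its index m_i
  (i.e. the X_n are treated as pairwise disjoint). A word is a nonempty list of
  tagged entries with strictly increasing tags.\<close>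

type_synonym 'x word = "(nat \<times> 'x) list"

definition FIN :: "(nat \<Rightarrow> 'x set) \<Rightarrow> 'x word set" where
  "FIN X = {w. w \<noteq> [] \<and> sorted_wrt (<) (map fst w) \<and> (\<forall>(m, x)\<in>set w. x \<in> X m)}"

definition pdefined :: "(nat \<Rightarrow> 'x set) \<Rightarrow> 'x word \<Rightarrow> 'x word \<Rightarrow> bool" where
  "pdefined X u w \<longleftrightarrow> u \<in> FIN X \<and> w \<in> FIN X \<and> fst (last u) < fst (hd w)"

fun prodl :: "(nat \<Rightarrow> 'x set) \<Rightarrow> 'x word list \<Rightarrow> 'x word option" where
  "prodl X [] = None"
| "prodl X [w] = (if w \<in> FIN X then Some w else None)"
| "prodl X (w # v # ws) =
     (case prodl X (v # ws) of None \<Rightarrow> None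
      | Some u \<Rightarrow> (if pdefined X w u then Some (w @ u) else None))"

definition wact :: "(nat \<Rightarrow> 'b option \<Rightarrow> 'x \<Rightarrow> 'x) \<Rightarrow> 'b option \<Rightarrow> 'x word \<Rightarrow> 'x word" where
  "wact act a w = map (\<lambda>(m, x). (m, act m a x)) w"

definition right_ideal :: "(nat \<Rightarrow> 'x set) \<Rightarrow> 'x word set \<Rightarrow> bool" where
  "right_ideal X E \<longleftrightarrow> E \<noteq> {} \<and> E \<subseteq> FIN X \<and>
     (\<forall>w\<in>E. \<forall>u. pdefined X w u \<longrightarrow> w @ u \<in> E)"

definition E_directed :: "(nat \<Rightarrow> 'x set) \<Rightarrow> 'x word set \<Rightarrow> bool" where
  "E_directed X E \<longleftrightarrow>
     (\<forall>U. finite U \<and> U \<subseteq> FIN X \<longrightarrow> (\<exists>u\<in>E. \<forall>w\<in>U. pdefined X w u))"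

definition basic :: "(nat \<Rightarrow> 'x set) \<Rightarrow> (nat \<Rightarrow> 'x word) \<Rightarrow> bool" where
  "basic X s \<longleftrightarrow> (\<forall>ks. ks \<noteq> [] \<and> sorted_wrt (<) ks \<longrightarrow> prodl X (map s ks) \<noteq> None)"

text \<open>The double sequence (v_i, v'_i) as the single sequence v_0, v'_0, v_1, v'_1, ...\<close>
definition interleave :: "(nat \<Rightarrow> 'a) \<Rightarrow> (nat \<Rightarrow> 'a) \<Rightarrow> nat \<Rightarrow> 'a" where
  "interleave v v' k = (if even k then v (k div 2) else v' (k div 2))"

definition basic_double :: "(nat \<Rightarrow> 'x set) \<Rightarrow> (nat \<Rightarrow> 'x word) \<Rightarrow> (nat \<Rightarrow> 'x word) \<Rightarrow> bool" where
  "basic_double X v v' \<longleftrightarrow> basic X (interleave v v')"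

definition pattern_word ::
  "(nat \<Rightarrow> 'b option \<Rightarrow> 'x \<Rightarrow> 'x) \<Rightarrow> (nat \<Rightarrow> 'x word) \<Rightarrow> (nat \<Rightarrow> 'x word) \<Rightarrow> nat
     \<Rightarrow> (nat \<Rightarrow> nat) \<Rightarrow> (nat \<Rightarrow> nat) \<Rightarrow> (nat \<Rightarrow> 'b) \<Rightarrow> (nat \<Rightarrow> 'b) \<Rightarrow> 'x word" where
  "pattern_word act v v' n is js bs bs' =
     concat (map (\<lambda>k. wact act (Some (bs k)) (v (is k)) @ wact act (Some (bs' k)) (v' (js k))) [0..<n])
     @ wact act (Some (bs n)) (v (is n))"

end

theory Submission
  imports Defs
begin


lemma Zorn_min:
  fixes \<A> :: "'a set set"
  assumes ne: "\<A> \<noteq> {}"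
    and ch: "\<And>\<C>. \<C> \<noteq> {} \<Longrightarrow> \<C> \<subseteq> \<A> \<Longrightarrow> (\<forall>X\<in>\<C>. \<forall>Y\<in>\<C>. X \<subseteq> Y \<or> Y \<subseteq> X) \<Longrightarrow> \<Inter>\<C> \<in> \<A>"
  shows "\<exists>M\<in>\<A>. \<forall>X\<in>\<A>. X \<subseteq> M \<longrightarrow> X = M"
proof -
  have "\<exists>M\<in>uminus ` \<A>. \<forall>X\<in>uminus ` \<A>. M \<subseteq> X \<longrightarrow> X = M"
  proof (rule subset_Zorn_nonempty)
    show "uminus ` \<A> \<noteq> {}" using ne by auto
    fix \<C> assume C: "\<C> \<noteq> {}" "subset.chain (uminus ` \<A>) \<C>"
    let ?D = "uminus ` \<C>"
    have "?D \<subseteq> \<A>" using C(2) unfolding subset_chain_def by auto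
    moreover have "\<forall>X\<in>?D. \<forall>Y\<in>?D. X \<subseteq> Y \<or> Y \<subseteq> X" using C(2) unfolding subset_chain_def by auto
    ultimately have "\<Inter>?D \<in> \<A>" using ch C(1) by auto
    moreover have "\<Union>\<C> = - \<Inter>?D" by auto
    ultimately show "\<Union>\<C> \<in> uminus ` \<A>" by (metis image_eqI)
  qed
  then obtain M where M: "M \<in> \<A>" "\<forall>X\<in>\<A>. -M \<subseteq> -X \<longrightarrow> -X = -M" by auto
  show ?thesis
  proof (rule bexI[OF _ M(1)], intro ballI impI)
    fix X assume "X \<in> \<A>" "X \<subseteq> M"
    then have "-X = -M" using M(2) by auto
    then show "X = M" by auto
  qed
qed

definition ultra :: "'a set set \<Rightarrow> bool" where
  "ultra W \<longleftrightarrow> (\<forall>S T. S \<in> W \<and> S \<subseteq> T \<longrightarrow> T \<in> W) \<and> (\<forall>S T. S \<in> W \<and> T \<in> W \<longrightarrow> S \<inter> T \<in> W)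
     \<and> {} \<notin> W \<and> (\<forall>S. S \<in> W \<or> -S \<in> W)"

definition fip :: "'a set set \<Rightarrow> bool" where
  "fip G \<longleftrightarrow> (\<forall>S. finite S \<and> S \<subseteq> G \<longrightarrow> \<Inter>S \<noteq> {})"

lemma ultra_up: "ultra W \<Longrightarrow> S \<in> W \<Longrightarrow> S \<subseteq> T \<Longrightarrow> T \<in> W"
  unfolding ultra_def by blast
lemma ultra_int: "ultra W \<Longrightarrow> S \<in> W \<Longrightarrow> T \<in> W \<Longrightarrow> S \<inter> T \<in> W"
  unfolding ultra_def by blast
lemma ultra_empty: "ultra W \<Longrightarrow> {} \<notin> W"
  unfolding ultra_def by blast
lemma ultra_compl: "ultra W \<Longrightarrow> S \<notin> W \<Longrightarrow> -S \<in> W"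
  unfolding ultra_def by blast
lemma ultra_ne: "ultra W \<Longrightarrow> S \<in> W \<Longrightarrow> S \<noteq> {}"
  unfolding ultra_def by blast
lemma ultra_UNIV: assumes "ultra W" shows "UNIV \<in> W"
proof -
  have "{} \<in> W \<or> -{} \<in> W" using assms unfolding ultra_def by blast
  then show ?thesis using ultra_empty[OF assms] by simp
qed
lemma ultra_not_both: "ultra W \<Longrightarrow> S \<in> W \<Longrightarrow> -S \<in> W \<Longrightarrow> False"
  using ultra_int ultra_empty by fastforce
lemma ultra_eqI:
  assumes U: "ultra U" and V: "ultra V" and sub: "U \<subseteq> V"
  shows "U = V"
proof (rule subset_antisym[OF sub], rule subsetI)
  fix A assume AV: "A \<in> V"
  show "A \<in> U"
  proof (rule ccontr)
    assume "A \<notin> U"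
    then have "-A \<in> U" using ultra_compl U by blast
    then have "-A \<in> V" using sub by blast
    then show False using ultra_not_both[OF V AV] by simp
  qed
qed
lemma ultra_cong1: assumes "ultra W" "Z \<in> W" "S \<inter> Z = T \<inter> Z" "S \<in> W" shows "T \<in> W"
proof -
  have "S \<inter> Z \<in> W" using assms ultra_int by blast
  then have "T \<inter> Z \<in> W" using assms(3) by simp
  then show ?thesis using ultra_up[OF assms(1)] by blast
qed
lemma ultra_cong: "ultra W \<Longrightarrow> Z \<in> W \<Longrightarrow> S \<inter> Z = T \<inter> Z \<Longrightarrow> S \<in> W \<longleftrightarrow> T \<in> W"
  using ultra_cong1[of W Z S T] ultra_cong1[of W Z T S] by auto

lemma ultra_finite_Inter:
  assumes "ultra W" "finite I" "\<And>i. i \<in> I \<Longrightarrow> f i \<in> W"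
  shows "{x. \<forall>i\<in>I. x \<in> f i} \<in> W"
  using assms(2,3)
proof (induction I rule: finite_induct)
  case empty then show ?case using ultra_UNIV[OF assms(1)] by simp
next
  case (insert a I)
  have "{x. \<forall>i\<in>insert a I. x \<in> f i} = f a \<inter> {x. \<forall>i\<in>I. x \<in> f i}" by auto
  then show ?case using insert ultra_int[OF assms(1)] by auto
qed

lemma ultra_Inter:
  assumes "ultra W" "finite S" "S \<subseteq> W"
  shows "\<Inter>S \<in> W"
proof -
  have "{x. \<forall>i\<in>S. x \<in> id i} \<in> W" using ultra_finite_Inter[OF assms(1,2), of id] assms(3) by auto
  then show ?thesis by (simp add: Inter_eq)
qed

lemma ultra_finite_Union:
  assumes "ultra W" "{x. \<exists>i<(r::nat). x \<in> f i} \<in> W"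
  shows "\<exists>i<r. f i \<in> W"
proof (rule ccontr)
  assume "\<not> ?thesis"
  then have "\<forall>i\<in>{..<r}. - f i \<in> W"
  proof (intro ballI)
    fix i assume "i \<in> {..<r}" "\<not> (\<exists>i<r. f i \<in> W)"
    then have "f i \<notin> W" by auto
    then show "- f i \<in> W" by (rule ultra_compl[OF assms(1)])
  qed
  then have "{x. \<forall>i\<in>{..<r}. x \<in> - f i} \<in> W" using ultra_finite_Inter[OF assms(1) finite_lessThan, where f="\<lambda>i. - f i"] by blast
  moreover have "{x. \<forall>i\<in>{..<r}. x \<in> - f i} \<inter> {x. \<exists>i<r. x \<in> f i} = {}" by auto
  moreover have "{x. \<forall>i\<in>{..<r}. x \<in> - f i} \<inter> {x. \<exists>i<r. x \<in> f i} \<in> W"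
    using ultra_int[OF assms(1) calculation(1) assms(2)] .
  ultimately have "{} \<in> W" by simp
  then show False using ultra_empty[OF assms(1)] by simp
qed

lemma fipD: "fip G \<Longrightarrow> finite S \<Longrightarrow> S \<subseteq> G \<Longrightarrow> \<Inter>S \<noteq> {}"
  unfolding fip_def by blast

lemma fip_insert_fail:
  assumes "\<not> fip (insert S G)"
  shows "\<exists>T. finite T \<and> T \<subseteq> G \<and> \<Inter>T \<inter> S = {}"
proof -
  obtain T where T: "finite T" "T \<subseteq> insert S G" "\<Inter>T = {}" using assms unfolding fip_def by blast
  have "\<Inter>(T - {S}) \<inter> S \<subseteq> \<Inter>T" by auto
  then show ?thesis using T by (intro exI[of _ "T - {S}"]) auto
qed

lemma fip_insertI:
  assumes "fip G" "\<And>T. finite T \<Longrightarrow> T \<subseteq> G \<Longrightarrow> \<Inter>T \<inter> S \<noteq> {}"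
  shows "fip (insert S G)"
  unfolding fip_def
proof (intro allI impI)
  fix T assume T: "finite T \<and> T \<subseteq> insert S G"
  show "\<Inter>T \<noteq> {}"
  proof (cases "S \<in> T")
    case True
    have "\<Inter>T = \<Inter>(T - {S}) \<inter> S" using True by auto
    moreover have "finite (T - {S})" "T - {S} \<subseteq> G" using T by auto
    ultimately show ?thesis using assms(2)[of "T - {S}"] by simp
  next
    case False
    then have "T \<subseteq> G" using T by auto
    then show ?thesis using fipD[OF assms(1)] T by blast
  qed
qed

lemma ultrafilter_exists:
  assumes "fip A"
  shows "\<exists>W. ultra W \<and> A \<subseteq> W"
proof -
  let ?\<Phi> = "{G. A \<subseteq> G \<and> fip G}"
  have "\<exists>M\<in>?\<Phi>. \<forall>X\<in>?\<Phi>. M \<subseteq> X \<longrightarrow> X = M"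
  proof (rule subset_Zorn_nonempty)
    show "?\<Phi> \<noteq> {}" using assms by auto
    fix C assume C: "C \<noteq> {}" "subset.chain ?\<Phi> C"
    have "fip (\<Union>C)" unfolding fip_def
    proof (intro allI impI)
      fix S assume S: "finite S \<and> S \<subseteq> \<Union>C"
      then obtain G where "G \<in> C" "S \<subseteq> G" using finite_subset_Union_chain[OF _ _ C(1) C(2)] by blast
      then show "\<Inter>S \<noteq> {}" using C(2) S unfolding subset_chain_def fip_def by blast
    qed
    moreover have "A \<subseteq> \<Union>C"
    proof -
      obtain G where "G \<in> C" using C(1) by blast
      then have "A \<subseteq> G" using C(2) unfolding subset_chain_def by blast
      then show ?thesis using \<open>G \<in> C\<close> by blast
    qed
    ultimately show "\<Union>C \<in> ?\<Phi>" by auto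
  qed
  then obtain G where G: "A \<subseteq> G" "fip G" and max: "\<And>H. A \<subseteq> H \<Longrightarrow> fip H \<Longrightarrow> G \<subseteq> H \<Longrightarrow> H = G" by auto
  have ins: "S \<in> G" if "fip (insert S G)" for S
    using max[of "insert S G"] that G by auto
  have "ultra G" unfolding ultra_def
  proof (intro conjI allI impI)
    fix S T assume ST: "S \<in> G \<and> S \<subseteq> T"
    show "T \<in> G"
    proof (intro ins fip_insertI[OF G(2)])
      fix R assume "finite R" "R \<subseteq> G"
      then have "\<Inter>(insert S R) \<noteq> {}" using ST by (intro fipD[OF G(2)]) auto
      then show "\<Inter>R \<inter> T \<noteq> {}" using ST by auto
    qed
  next
    fix S T assume ST: "S \<in> G \<and> T \<in> G"
    show "S \<inter> T \<in> G"
    proof (intro ins fip_insertI[OF G(2)])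
      fix R assume "finite R" "R \<subseteq> G"
      then have "\<Inter>(insert S (insert T R)) \<noteq> {}" using ST by (intro fipD[OF G(2)]) auto
      then show "\<Inter>R \<inter> (S \<inter> T) \<noteq> {}" by auto
    qed
  next
    show "{} \<notin> G"
    proof
      assume "{} \<in> G"
      then have "finite {{}} \<and> {{}} \<subseteq> G" by auto
      then have "\<Inter>{{}} \<noteq> {}" using G(2) unfolding fip_def by blast
      then show False by simp
    qed
  next
    fix S
    show "S \<in> G \<or> -S \<in> G"
    proof (rule ccontr)
      assume "\<not> (S \<in> G \<or> -S \<in> G)"
      then have "\<not> fip (insert S G)" "\<not> fip (insert (-S) G)" using ins by auto
      then obtain T1 T2 where "finite T1" "T1 \<subseteq> G" "\<Inter>T1 \<inter> S = {}" "finite T2" "T2 \<subseteq> G" "\<Inter>T2 \<inter> -S = {}"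
        using fip_insert_fail by metis
      moreover have "\<Inter>(T1 \<union> T2) \<subseteq> (\<Inter>T1 \<inter> S) \<union> (\<Inter>T2 \<inter> -S)" by auto
      ultimately have "\<Inter>(T1 \<union> T2) = {}" "finite (T1 \<union> T2) \<and> T1 \<union> T2 \<subseteq> G" by auto
      then show False using G(2) unfolding fip_def by blast
    qed
  qed
  then show ?thesis using G by auto
qed



lemma FIN_ne: "w \<in> FIN X \<Longrightarrow> w \<noteq> []"
  unfolding FIN_def by auto

lemma FIN_sorted: "w \<in> FIN X \<Longrightarrow> sorted_wrt (<) (map fst w)"
  unfolding FIN_def by auto

lemma FIN_mem: "w \<in> FIN X \<Longrightarrow> (m, x) \<in> set w \<Longrightarrow> x \<in> X m"
  unfolding FIN_def by auto

lemma sorted_hd_le: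
  fixes w :: "(nat \<times> 'x) list"
  assumes "sorted_wrt (<) (map fst w)" "a \<in> set w"
  shows "fst (hd w) \<le> fst a"
  using assms by (cases w) auto

lemma sorted_le_last:
  fixes w :: "(nat \<times> 'x) list"
  assumes "sorted_wrt (<) (map fst w)" "a \<in> set w"
  shows "fst a \<le> fst (last w)"
  using assms
proof (induction w)
  case Nil then show ?case by simp
next
  case (Cons b w)
  show ?case
  proof (cases "w = []")
    case True then show ?thesis using Cons by simp
  next
    case False
    have lw: "last (b # w) = last w" using False by simp
    have "last w \<in> set w" using False by simp
    then have blt: "fst b < fst (last w)" using Cons.prems(1) by auto
    show ?thesis
    proof (cases "a = b")
      case True then show ?thesis using blt lw by simp
    next
      case False
      then have "a \<in> set w" using Cons.prems(2) by simp
      then show ?thesis using Cons.IH Cons.prems(1) lw by simp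
    qed
  qed
qed

lemma FIN_hd_le_last: "w \<in> FIN X \<Longrightarrow> fst (hd w) \<le> fst (last w)"
  using sorted_hd_le[OF FIN_sorted, of w X "last w"] FIN_ne[of w X] by simp

lemma pdef_app:
  assumes "pdefined X w u"
  shows "w @ u \<in> FIN X"
proof -
  have w: "w \<in> FIN X" and u: "u \<in> FIN X" and lt: "fst (last w) < fst (hd u)"
    using assms unfolding pdefined_def by auto
  have "\<forall>a\<in>set w. \<forall>b\<in>set u. fst a < fst b"
  proof (intro ballI)
    fix a b assume "a \<in> set w" "b \<in> set u"
    then have "fst a \<le> fst (last w)" "fst (hd u) \<le> fst b"
      using sorted_le_last[OF FIN_sorted[OF w]] sorted_hd_le[OF FIN_sorted[OF u]] by auto
    then show "fst a < fst b" using lt by simp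
  qed
  then have "sorted_wrt (<) (map fst (w @ u))"
    using FIN_sorted[OF w] FIN_sorted[OF u] by (auto simp: sorted_wrt_append)
  moreover have "\<forall>(m, x)\<in>set (w @ u). x \<in> X m" using w u unfolding FIN_def by auto
  moreover have "w @ u \<noteq> []" using FIN_ne[OF w] by simp
  ultimately show ?thesis unfolding FIN_def by blast
qed

lemma pdef_hd: "pdefined X w u \<Longrightarrow> hd (w @ u) = hd w"
  unfolding pdefined_def using FIN_ne[of w X] by auto
lemma pdef_last: "pdefined X w u \<Longrightarrow> last (w @ u) = last u"
  unfolding pdefined_def using FIN_ne[of u X] by auto

lemma pdef_assoc1:
  assumes "pdefined X x y"
  shows "pdefined X (x @ y) z \<longleftrightarrow> pdefined X y z"
  using assms pdef_app[OF assms] pdef_last[OF assms] unfolding pdefined_def by auto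

lemma pdef_assoc2:
  assumes "pdefined X y z"
  shows "pdefined X x (y @ z) \<longleftrightarrow> pdefined X x y"
  using assms pdef_app[OF assms] pdef_hd[OF assms] unfolding pdefined_def by auto

definition dv :: "(nat \<Rightarrow> 'x set) \<Rightarrow> 'x word set \<Rightarrow> 'x word \<Rightarrow> 'x word set" where
  "dv X A w = {u. pdefined X w u \<and> w @ u \<in> A}"

lemma dv_dv:
  "dv X (dv X A x) y = (if pdefined X x y then dv X A (x @ y) else {})"
proof (cases "pdefined X x y")
  case True
  have "dv X (dv X A x) y = dv X A (x @ y)"
    unfolding dv_def using pdef_assoc1[OF True] pdef_assoc2[of X _ _ x] True by auto
  then show ?thesis using True by simp
next
  case False
  have "dv X (dv X A x) y = {}"
  proof -
    { fix z assume "pdefined X y z" "pdefined X x (y @ z)"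
      then have False using pdef_assoc2 False by blast }
    then show ?thesis unfolding dv_def by auto
  qed
  then show ?thesis using False by simp
qed

locale psg =
  fixes X :: "nat \<Rightarrow> 'x set"
  assumes Xne: "\<And>m. X m \<noteq> {}"
begin

definition tailS :: "nat \<Rightarrow> 'x word set" where
  "tailS N = {w \<in> FIN X. N < fst (hd w)}"

definition gS :: "'x word set set set" where
  "gS = {W. ultra W \<and> (\<forall>N. tailS N \<in> W)}"

definition mu :: "'x word set set \<Rightarrow> 'x word set set \<Rightarrow> 'x word set set" where
  "mu U V = {A. {w. dv X A w \<in> V} \<in> U}"

definition common :: "'x word set set set \<Rightarrow> 'x word set set" where
  "common C = {A. \<forall>V\<in>C. A \<in> V}"

definition closedS :: "'x word set set set \<Rightarrow> bool" where
  "closedS C \<longleftrightarrow> C \<subseteq> gS \<and> (\<forall>U\<in>gS. common C \<subseteq> U \<longrightarrow> U \<in> C)"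

lemma gS_ultra: "U \<in> gS \<Longrightarrow> ultra U"
  unfolding gS_def by auto
lemma gS_tail: "U \<in> gS \<Longrightarrow> tailS N \<in> U"
  unfolding gS_def by auto
lemma tail_FIN: "tailS N \<subseteq> FIN X"
  unfolding tailS_def by auto
lemma gS_FIN: "U \<in> gS \<Longrightarrow> FIN X \<in> U"
  using gS_tail[of U 0] tail_FIN[of 0] ultra_up[OF gS_ultra] by blast

lemma tail_pdef: "w \<in> FIN X \<Longrightarrow> tailS (fst (last w)) \<subseteq> {u. pdefined X w u}"
  unfolding tailS_def pdefined_def by auto

lemma gS_pdef: "U \<in> gS \<Longrightarrow> w \<in> FIN X \<Longrightarrow> {u. pdefined X w u} \<in> U"
  using gS_tail[of U "fst (last w)"] tail_pdef[of w] ultra_up[OF gS_ultra] by blast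

lemma mu_gS:
  assumes U: "U \<in> gS" and V: "V \<in> gS"
  shows "mu U V \<in> gS"
proof -
  have uU: "ultra U" and uV: "ultra V" using U V gS_ultra by auto
  have "ultra (mu U V)" unfolding ultra_def
  proof (intro conjI allI impI)
    fix S T assume ST: "S \<in> mu U V \<and> S \<subseteq> T"
    have "{w. dv X S w \<in> V} \<subseteq> {w. dv X T w \<in> V}"
    proof
      fix w assume "w \<in> {w. dv X S w \<in> V}"
      moreover have "dv X S w \<subseteq> dv X T w" using ST unfolding dv_def by auto
      ultimately show "w \<in> {w. dv X T w \<in> V}" using ultra_up[OF uV] by blast
    qed
    moreover have "{w. dv X S w \<in> V} \<in> U" using ST by (simp add: mu_def)
    ultimately have "{w. dv X T w \<in> V} \<in> U" using ultra_up[OF uU] by blast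
    then show "T \<in> mu U V" by (simp add: mu_def)
  next
    fix S T assume ST: "S \<in> mu U V \<and> T \<in> mu U V"
    have "{w. dv X S w \<in> V} \<inter> {w. dv X T w \<in> V} \<subseteq> {w. dv X (S \<inter> T) w \<in> V}"
    proof
      fix w assume "w \<in> {w. dv X S w \<in> V} \<inter> {w. dv X T w \<in> V}"
      then have "dv X S w \<inter> dv X T w \<in> V" using ultra_int[OF uV] by blast
      moreover have "dv X S w \<inter> dv X T w = dv X (S \<inter> T) w" unfolding dv_def by auto
      ultimately show "w \<in> {w. dv X (S \<inter> T) w \<in> V}" by simp
    qed
    moreover have "{w. dv X S w \<in> V} \<in> U" "{w. dv X T w \<in> V} \<in> U" using ST by (simp_all add: mu_def)
    then have "{w. dv X S w \<in> V} \<inter> {w. dv X T w \<in> V} \<in> U"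
      using ultra_int[OF uU] by blast
    ultimately have "{w. dv X (S \<inter> T) w \<in> V} \<in> U" using ultra_up[OF uU] by blast
    then show "S \<inter> T \<in> mu U V" by (simp add: mu_def)
  next
    have "{w. dv X {} w \<in> V} = {}" using ultra_empty[OF uV] unfolding dv_def by simp
    then show "{} \<notin> mu U V" using ultra_empty[OF uU] unfolding mu_def by simp
  next
    fix S
    show "S \<in> mu U V \<or> - S \<in> mu U V"
    proof (cases "S \<in> mu U V")
      case True then show ?thesis by blast
    next
      case False
      then have "S \<notin> mu U V" .
      then have "{w. dv X S w \<in> V} \<notin> U" by (simp add: mu_def)
      then have "- {w. dv X S w \<in> V} \<in> U" by (rule ultra_compl[OF uU])
      then have "- {w. dv X S w \<in> V} \<inter> FIN X \<in> U" using ultra_int[OF uU _ gS_FIN[OF U]] by blast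
      moreover have "- {w. dv X S w \<in> V} \<inter> FIN X \<subseteq> {w. dv X (-S) w \<in> V}"
      proof
        fix w assume w: "w \<in> - {w. dv X S w \<in> V} \<inter> FIN X"
        then have "dv X S w \<notin> V" by simp
        then have "- dv X S w \<in> V" by (rule ultra_compl[OF uV])
        moreover have "{u. pdefined X w u} \<in> V" using gS_pdef[OF V] w by blast
        ultimately have "- dv X S w \<inter> {u. pdefined X w u} \<in> V" using ultra_int[OF uV] by blast
        moreover have "- dv X S w \<inter> {u. pdefined X w u} = dv X (-S) w" unfolding dv_def by auto
        ultimately show "w \<in> {w. dv X (-S) w \<in> V}" by simp
      qed
      ultimately have "{w. dv X (-S) w \<in> V} \<in> U" using ultra_up[OF uU] by blast
      then show ?thesis by (simp add: mu_def)
    qed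
  qed
  moreover have "tailS N \<in> mu U V" for N
  proof -
    have "tailS N \<subseteq> {w. dv X (tailS N) w \<in> V}"
    proof
      fix w assume w: "w \<in> tailS N"
      then have wF: "w \<in> FIN X" using tail_FIN by blast
      have "{u. pdefined X w u} \<subseteq> dv X (tailS N) w"
      proof
        fix u assume "u \<in> {u. pdefined X w u}"
        then have pd: "pdefined X w u" by simp
        then show "u \<in> dv X (tailS N) w" using w pdef_app[OF pd] pdef_hd[OF pd]
          unfolding dv_def tailS_def by auto
      qed
      then show "w \<in> {w. dv X (tailS N) w \<in> V}" using gS_pdef[OF V wF] ultra_up[OF uV] by blast
    qed
    then have "{w. dv X (tailS N) w \<in> V} \<in> U" using gS_tail[OF U] ultra_up[OF uU] by blast
    then show ?thesis by (simp add: mu_def)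
  qed
  ultimately show ?thesis unfolding gS_def by blast
qed

lemma mu_assoc:
  assumes W: "W \<in> gS"
  shows "mu (mu U V) W = mu U (mu V W)"
proof -
  have eq: "{y. dv X (dv X A x) y \<in> W} = dv X {w. dv X A w \<in> W} x" for A x
  proof -
    have "dv X (dv X A x) y \<in> W \<longleftrightarrow> pdefined X x y \<and> dv X A (x @ y) \<in> W" for y
      using dv_dv[of X A x y] ultra_empty[OF gS_ultra[OF W]] by auto
    then show ?thesis unfolding dv_def by auto
  qed
  show ?thesis by (rule set_eqI) (simp add: mu_def eq)
qed

lemma common_mono: "C \<subseteq> D \<Longrightarrow> common D \<subseteq> common C"
  unfolding common_def by auto

lemma closed_basic: "closedS {U \<in> gS. S \<in> U}"
  unfolding closedS_def common_def by auto

lemma closed_gS: "closedS gS"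
  unfolding closedS_def by auto

lemma closed_Inter:
  assumes "B \<noteq> {}" "\<And>C. C \<in> B \<Longrightarrow> closedS C"
  shows "closedS (\<Inter>B)"
  unfolding closedS_def
proof (intro conjI ballI impI)
  show "\<Inter>B \<subseteq> gS" using assms unfolding closedS_def by blast
  fix U assume U: "U \<in> gS" "common (\<Inter>B) \<subseteq> U"
  show "U \<in> \<Inter>B"
  proof
    fix C assume C: "C \<in> B"
    then have "common C \<subseteq> U" using U(2) common_mono[of "\<Inter>B" C] by blast
    then show "U \<in> C" using assms(2)[OF C] U(1) unfolding closedS_def by blast
  qed
qed

lemma closed_Int: "closedS C \<Longrightarrow> closedS D \<Longrightarrow> closedS (C \<inter> D)"
  using closed_Inter[of "{C, D}"] by auto

lemma compact:
  assumes Bne: "B \<noteq> {}" and cl: "\<And>C. C \<in> B \<Longrightarrow> closedS C"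
    and fi: "\<And>F. finite F \<Longrightarrow> F \<noteq> {} \<Longrightarrow> F \<subseteq> B \<Longrightarrow> \<Inter>F \<noteq> {}"
  shows "\<exists>U. \<forall>C\<in>B. U \<in> C"
proof -
  obtain C0 where C0: "C0 \<in> B" using Bne by blast
  let ?A = "\<Union>(common ` B)"
  have "fip ?A" unfolding fip_def
  proof (intro allI impI)
    fix S assume S: "finite S \<and> S \<subseteq> ?A"
    then have "\<forall>s\<in>S. \<exists>C\<in>B. s \<in> common C" by blast
    then obtain g where g: "\<And>s. s \<in> S \<Longrightarrow> g s \<in> B \<and> s \<in> common (g s)" by metis
    let ?F = "insert C0 (g ` S)"
    have "finite ?F" using S by simp
    moreover have "?F \<subseteq> B" using g C0 by blast
    ultimately have "\<Inter>?F \<noteq> {}" using fi by blast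
    then obtain V where V: "V \<in> \<Inter>?F" by blast
    then have "V \<in> C0" by simp
    then have uV: "ultra V" using cl[OF C0] gS_ultra unfolding closedS_def by blast
    have "S \<subseteq> V"
    proof
      fix s assume s: "s \<in> S"
      then have "V \<in> g s" using V by blast
      then show "s \<in> V" using g[OF s] unfolding common_def by blast
    qed
    then have "\<Inter>S \<in> V" using ultra_Inter[OF uV] S by blast
    then show "\<Inter>S \<noteq> {}" using ultra_ne[OF uV] by blast
  qed
  then obtain W where W: "ultra W" "?A \<subseteq> W" using ultrafilter_exists by blast
  have "tailS N \<in> common C0" for N using cl[OF C0] gS_tail unfolding closedS_def common_def by blast
  then have "tailS N \<in> W" for N using W(2) C0 by blast
  then have WgS: "W \<in> gS" using W(1) unfolding gS_def by blast
  have "W \<in> C" if "C \<in> B" for C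
  proof -
    have "common C \<subseteq> W" using W(2) that by blast
    then show ?thesis using cl[OF that] WgS unfolding closedS_def by blast
  qed
  then show ?thesis by blast
qed

lemma compact_chain:
  assumes Bne: "B \<noteq> {}" and cl: "\<And>C. C \<in> B \<Longrightarrow> closedS C \<and> C \<noteq> {}"
    and ch: "\<forall>X\<in>B. \<forall>Y\<in>B. X \<subseteq> Y \<or> Y \<subseteq> X"
  shows "\<Inter>B \<noteq> {}"
proof -
  have "\<exists>U. \<forall>C\<in>B. U \<in> C"
  proof (rule compact[OF Bne])
    show "closedS C" if "C \<in> B" for C using cl[OF that] by blast
    fix F assume F: "finite F" "F \<noteq> {}" "F \<subseteq> B"
    have "subset.chain B F" using F(3) ch unfolding subset_chain_def by blast
    then have "\<Inter>F \<in> F" using Inter_in_chain[OF F(1,2)] by blast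
    then show "\<Inter>F \<noteq> {}" using cl F(3) by blast
  qed
  then show ?thesis by blast
qed

lemma closed_mul_right:
  assumes C: "closedS C" and x: "x \<in> gS"
  shows "closedS ((\<lambda>V. mu V x) ` C)"
  unfolding closedS_def
proof (intro conjI ballI impI)
  show "(\<lambda>V. mu V x) ` C \<subseteq> gS" using C x mu_gS unfolding closedS_def by blast
  fix U assume U: "U \<in> gS" "common ((\<lambda>V. mu V x) ` C) \<subseteq> U"
  have uU: "ultra U" using U gS_ultra by blast
  have Cne: "C \<noteq> {}"
  proof
    assume "C = {}"
    then have "{} \<in> U" using U(2) unfolding common_def by auto
    then show False using ultra_empty[OF uU] by blast
  qed
  define K where "K A = C \<inter> {V \<in> gS. {w. dv X A w \<in> x} \<in> V}" for A
  have K_alt: "K A = {V \<in> C. A \<in> mu V x}" for A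
    unfolding K_def mu_def using C unfolding closedS_def by auto
  have "\<exists>V. \<forall>D\<in>K ` U. V \<in> D"
  proof (rule compact)
    show "K ` U \<noteq> {}" using ultra_UNIV[OF uU] by blast
    show "closedS D" if "D \<in> K ` U" for D
      using that closed_Int[OF C closed_basic] unfolding K_def by blast
    fix F assume F: "finite F" "F \<noteq> {}" "F \<subseteq> K ` U"
    then obtain As where As: "As \<subseteq> U" "finite As" "F = K ` As" by (meson finite_subset_image)
    have "\<Inter>As \<in> U" using ultra_Inter[OF uU As(2,1)] .
    have sub: "K (\<Inter>As) \<subseteq> \<Inter>F"
    proof
      fix V assume V: "V \<in> K (\<Inter>As)"
      then have VC: "V \<in> C" and Vin: "\<Inter>As \<in> mu V x" using K_alt by auto
      have uVx: "ultra (mu V x)" using mu_gS[of V x] VC C x gS_ultra unfolding closedS_def by blast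
      show "V \<in> \<Inter>F"
      proof
        fix D assume "D \<in> F"
        then obtain A where A: "A \<in> As" "D = K A" using As(3) by blast
        then have "\<Inter>As \<subseteq> A" by blast
        then have "A \<in> mu V x" using ultra_up[OF uVx Vin] by blast
        then show "V \<in> D" using A VC K_alt by blast
      qed
    qed
    have "K (\<Inter>As) \<noteq> {}"
    proof
      assume e: "K (\<Inter>As) = {}"
      have "- \<Inter>As \<in> common ((\<lambda>V. mu V x) ` C)"
        unfolding common_def
      proof (intro CollectI ballI)
        fix W assume "W \<in> (\<lambda>V. mu V x) ` C"
        then obtain V where V: "V \<in> C" "W = mu V x" by blast
        then have "\<Inter>As \<notin> W" using e K_alt by blast
        moreover have "ultra W" using mu_gS[of V x] V C x gS_ultra unfolding closedS_def by blast
        ultimately show "- \<Inter>As \<in> W" using ultra_compl by blast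
      qed
      then have "- \<Inter>As \<in> U" using U(2) by blast
      then show False using ultra_not_both[OF uU \<open>\<Inter>As \<in> U\<close>] by blast
    qed
    then show "\<Inter>F \<noteq> {}" using sub by blast
  qed
  then obtain V where V: "\<And>A. A \<in> U \<Longrightarrow> V \<in> K A" by blast
  have VC: "V \<in> C" using V[OF ultra_UNIV[OF uU]] K_alt by blast
  have "U \<subseteq> mu V x" using V K_alt by blast
  moreover have "ultra (mu V x)" using mu_gS[of V x] VC C x gS_ultra unfolding closedS_def by blast
  ultimately have "U = mu V x" using ultra_eqI[OF uU] by blast
  then show "U \<in> (\<lambda>V. mu V x) ` C" using VC by blast
qed

definition semigrp :: "'x word set set set \<Rightarrow> bool" where
  "semigrp C \<longleftrightarrow> (\<forall>a\<in>C. \<forall>b\<in>C. mu a b \<in> C)"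

lemma ellis:
  assumes C: "closedS C" "C \<noteq> {}" "semigrp C"
  shows "\<exists>e\<in>C. mu e e = e"
proof -
  let ?A = "{D. D \<subseteq> C \<and> closedS D \<and> D \<noteq> {} \<and> semigrp D}"
  have "\<exists>M\<in>?A. \<forall>D\<in>?A. D \<subseteq> M \<longrightarrow> D = M"
  proof (rule Zorn_min)
    show "?A \<noteq> {}" using C by blast
    fix Ch assume Ch: "Ch \<noteq> {}" "Ch \<subseteq> ?A" "\<forall>X\<in>Ch. \<forall>Y\<in>Ch. X \<subseteq> Y \<or> Y \<subseteq> X"
    have cc: "closedS D \<and> D \<noteq> {}" if "D \<in> Ch" for D using Ch(2) that by blast
    have "closedS (\<Inter>Ch)" using closed_Inter[OF Ch(1)] cc by blast
    moreover have "\<Inter>Ch \<noteq> {}" using compact_chain[OF Ch(1) cc Ch(3)] by blast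
    moreover have "\<Inter>Ch \<subseteq> C"
    proof -
      obtain D where "D \<in> Ch" using Ch(1) by blast
      then have "D \<subseteq> C" using Ch(2) by blast
      then show ?thesis using \<open>D \<in> Ch\<close> by blast
    qed
    moreover have "semigrp (\<Inter>Ch)" unfolding semigrp_def
    proof (intro ballI)
      fix a b assume ab: "a \<in> \<Inter>Ch" "b \<in> \<Inter>Ch"
      show "mu a b \<in> \<Inter>Ch"
      proof
        fix D assume D: "D \<in> Ch"
        then have "semigrp D" using Ch(2) by blast
        then show "mu a b \<in> D" using ab D unfolding semigrp_def by blast
      qed
    qed
    ultimately show "\<Inter>Ch \<in> ?A" by simp
  qed
  then obtain M where M0: "M \<in> ?A" and Mmin0: "\<forall>D\<in>?A. D \<subseteq> M \<longrightarrow> D = M" by blast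
  have M: "M \<subseteq> C" "closedS M" "M \<noteq> {}" "semigrp M" using M0 by simp_all
  have Mmin: "D = M" if "D \<subseteq> C" "closedS D" "D \<noteq> {}" "semigrp D" "D \<subseteq> M" for D
    using Mmin0 that by simp
  obtain x where xM: "x \<in> M" using M(3) by blast
  have MgS: "M \<subseteq> gS" using M(2) unfolding closedS_def by blast
  have xg: "x \<in> gS" using xM MgS by blast
  let ?Mx = "(\<lambda>V. mu V x) ` M"
  have Mx1: "?Mx \<subseteq> M" using xM M(4) unfolding semigrp_def by blast
  have Mx2: "closedS ?Mx" using closed_mul_right[OF M(2) xg] .
  have Mx3: "?Mx \<noteq> {}" using M(3) by blast
  have Mx4: "semigrp ?Mx" unfolding semigrp_def
  proof (intro ballI)
    fix a b assume "a \<in> ?Mx" "b \<in> ?Mx"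
    then obtain a' b' where ab: "a' \<in> M" "b' \<in> M" "a = mu a' x" "b = mu b' x" by blast
    have "mu a b = mu (mu a b') x" using mu_assoc[OF xg, of a b'] ab by simp
    moreover have "mu a b' \<in> M" using ab xM M(4) unfolding semigrp_def by blast
    ultimately show "mu a b \<in> ?Mx" by blast
  qed
  have "?Mx \<subseteq> C" using Mx1 M(1) by blast
  from Mmin[OF this Mx2 Mx3 Mx4 Mx1] have "?Mx = M" .
  then obtain V0 where V0: "V0 \<in> M" "mu V0 x = x" using xM by (metis imageE)
  let ?K = "{V \<in> M. mu V x = x}"
  have K2: "closedS ?K" unfolding closedS_def
  proof (intro conjI ballI impI)
    show "?K \<subseteq> gS" using MgS by blast
    fix U assume U: "U \<in> gS" "common ?K \<subseteq> U"
    have "common M \<subseteq> U" using U(2) common_mono[of ?K M] by blast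
    then have UM: "U \<in> M" using M(2) U(1) unfolding closedS_def by blast
    have "x \<subseteq> mu U x"
    proof
      fix A assume "A \<in> x"
      then have "{w. dv X A w \<in> x} \<in> common ?K" unfolding common_def mu_def by auto
      then show "A \<in> mu U x" using U(2) unfolding mu_def by blast
    qed
    then have "x = mu U x" using ultra_eqI[OF gS_ultra[OF xg] gS_ultra[OF mu_gS[OF U(1) xg]]] by blast
    then show "U \<in> ?K" using UM by simp
  qed
  have K3: "?K \<noteq> {}" using V0 by blast
  have K4: "semigrp ?K" unfolding semigrp_def
  proof (intro ballI)
    fix a b assume a: "a \<in> ?K" and b: "b \<in> ?K"
    have "mu (mu a b) x = mu a (mu b x)" using mu_assoc[OF xg, of a b] .
    also have "\<dots> = x" using a b by simp
    finally have "mu (mu a b) x = x" .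
    moreover have "mu a b \<in> M" using a b M(4) unfolding semigrp_def by blast
    ultimately show "mu a b \<in> ?K" by simp
  qed
  have K1: "?K \<subseteq> M" by blast
  have "?K \<subseteq> C" using K1 M(1) by blast
  from Mmin[OF this K2 K3 K4 K1] have "?K = M" .
  then have "mu x x = x" using xM by blast
  then show ?thesis using xM M(1) by blast
qed

definition lideal :: "'x word set set set \<Rightarrow> 'x word set set set \<Rightarrow> bool" where
  "lideal T L \<longleftrightarrow> L \<subseteq> T \<and> (\<forall>t\<in>T. \<forall>l\<in>L. mu t l \<in> L)"

lemma min_lideal:
  assumes T: "closedS T" "T \<noteq> {}" "semigrp T"
  shows "\<exists>L. lideal T L \<and> closedS L \<and> L \<noteq> {} \<and> (\<forall>x\<in>L. \<forall>e\<in>L. mu e e = e \<longrightarrow> mu x e = x)"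
proof -
  let ?A = "{D. lideal T D \<and> closedS D \<and> D \<noteq> {}}"
  have "\<exists>M\<in>?A. \<forall>D\<in>?A. D \<subseteq> M \<longrightarrow> D = M"
  proof (rule Zorn_min)
    show "?A \<noteq> {}" using T unfolding lideal_def semigrp_def by blast
    fix Ch assume Ch: "Ch \<noteq> {}" "Ch \<subseteq> ?A" "\<forall>X\<in>Ch. \<forall>Y\<in>Ch. X \<subseteq> Y \<or> Y \<subseteq> X"
    have cc: "closedS D \<and> D \<noteq> {}" if "D \<in> Ch" for D using Ch(2) that by blast
    have "closedS (\<Inter>Ch)" using closed_Inter[OF Ch(1)] cc by blast
    moreover have "\<Inter>Ch \<noteq> {}" using compact_chain[OF Ch(1) cc Ch(3)] by blast
    moreover have "lideal T (\<Inter>Ch)" unfolding lideal_def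
    proof (intro conjI ballI)
      obtain D where "D \<in> Ch" using Ch(1) by blast
      then have "D \<subseteq> T" using Ch(2) unfolding lideal_def by blast
      then show "\<Inter>Ch \<subseteq> T" using \<open>D \<in> Ch\<close> by blast
      fix t l assume tl: "t \<in> T" "l \<in> \<Inter>Ch"
      show "mu t l \<in> \<Inter>Ch"
      proof
        fix D assume D: "D \<in> Ch"
        then have "lideal T D" using Ch(2) by blast
        then show "mu t l \<in> D" using tl D unfolding lideal_def by blast
      qed
    qed
    ultimately show "\<Inter>Ch \<in> ?A" by simp
  qed
  then obtain L where L: "lideal T L" "closedS L" "L \<noteq> {}"
    and Lmin: "\<And>D. lideal T D \<Longrightarrow> closedS D \<Longrightarrow> D \<noteq> {} \<Longrightarrow> D \<subseteq> L \<Longrightarrow> D = L" by blast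
  have TgS: "T \<subseteq> gS" using T(1) unfolding closedS_def by blast
  have "mu x e = x" if xL: "x \<in> L" and eL: "e \<in> L" and ee: "mu e e = e" for x e
  proof -
    have eT: "e \<in> T" using eL L(1) unfolding lideal_def by blast
    have eg: "e \<in> gS" using eT TgS by blast
    let ?Te = "(\<lambda>V. mu V e) ` T"
    have Te2: "closedS ?Te" using closed_mul_right[OF T(1) eg] .
    have Te3: "?Te \<noteq> {}" using T(2) by blast
    have Te4: "?Te \<subseteq> L" using L(1) eL unfolding lideal_def by blast
    have Te1: "lideal T ?Te" unfolding lideal_def
    proof (intro conjI ballI)
      show "?Te \<subseteq> T" using eT T(3) unfolding semigrp_def by blast
      fix t l assume "t \<in> T" "l \<in> ?Te"
      then obtain t' where t': "t' \<in> T" "l = mu t' e" by blast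
      have "mu t l = mu (mu t t') e" using mu_assoc[OF eg, of t t'] t' by simp
      moreover have "mu t t' \<in> T" using \<open>t \<in> T\<close> t'(1) T(3) unfolding semigrp_def by blast
      ultimately show "mu t l \<in> ?Te" by blast
    qed
    from Lmin[OF Te1 Te2 Te3 Te4] have "?Te = L" .
    then obtain t where t: "t \<in> T" "x = mu t e" using xL by (metis imageE)
    have "mu x e = mu t (mu e e)" using mu_assoc[OF eg, of t e] t by simp
    then show ?thesis using ee t by simp
  qed
  then show ?thesis using L by blast
qed

end



locale jset =
  fixes B :: "'b set" and X :: "nat \<Rightarrow> 'x set" and act :: "nat \<Rightarrow> 'b option \<Rightarrow> 'x \<Rightarrow> 'x"
    and p :: "nat \<Rightarrow> 'x" and E :: "'x word set"
  assumes finB: "finite B"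
    and pt: "\<And>n. pointed_J_set B (X n) (act n) (p n)"
    and ri: "right_ideal X E"
    and ed: "E_directed X E"
begin

lemma p_in: "p m \<in> X m" using pt[of m] unfolding pointed_J_set_def by blast

sublocale psg X
  by unfold_locales (use p_in in blast)

lemma act_closed: "a \<in> Jcarrier B \<Longrightarrow> x \<in> X m \<Longrightarrow> act m a x \<in> X m"
  using pt[of m] unfolding pointed_J_set_def is_J_action_def by blast

lemma act_comp: "a \<in> Jcarrier B \<Longrightarrow> c \<in> Jcarrier B \<Longrightarrow> x \<in> X m \<Longrightarrow> act m a (act m c x) = act m (jmult a c) x"
  using pt[of m] unfolding pointed_J_set_def is_J_action_def by blast

lemma SomeJ: "b \<in> B \<Longrightarrow> Some b \<in> Jcarrier B"
  unfolding Jcarrier_def by blast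

lemma act_fixed: "b \<in> B \<Longrightarrow> a \<in> Jcarrier B \<Longrightarrow> x \<in> X m \<Longrightarrow> act m a (act m (Some b) x) = act m (Some b) x"
  using act_comp[OF _ SomeJ] unfolding jmult_def by simp

definition bm :: "'b \<Rightarrow> 'x word \<Rightarrow> 'x word" where
  "bm b w = wact act (Some b) w"

definition bU :: "'b \<Rightarrow> 'x word set set \<Rightarrow> 'x word set set" where
  "bU b U = {A. {w. bm b w \<in> A} \<in> U}"

definition Zs :: "'x word set" where
  "Zs = {w \<in> FIN X. \<forall>(m, z)\<in>set w. \<forall>a\<in>Jcarrier B. act m a z = z}"

definition Ys :: "'x word set" where
  "Ys = {w \<in> FIN X. \<exists>m. (m, p m) \<in> set w}"

lemma map_fst_bm: "map fst (bm b w) = map fst w"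
  unfolding bm_def wact_def by (induction w) auto

lemma bm_ne: "bm b w = [] \<longleftrightarrow> w = []"
  unfolding bm_def wact_def by simp

lemma hd_bm: "w \<noteq> [] \<Longrightarrow> fst (hd (bm b w)) = fst (hd w)"
  using map_fst_bm[of b w] bm_ne[of b w] by (metis hd_map)

lemma last_bm: "w \<noteq> [] \<Longrightarrow> fst (last (bm b w)) = fst (last w)"
  using map_fst_bm[of b w] bm_ne[of b w] by (metis last_map)

lemma set_bm: "set (bm b w) = (\<lambda>(m, x). (m, act m (Some b) x)) ` set w"
  unfolding bm_def wact_def by simp

lemma bm_app: "bm b (x @ y) = bm b x @ bm b y"
  unfolding bm_def wact_def by simp

lemma bm_FIN: assumes "b \<in> B" "w \<in> FIN X" shows "bm b w \<in> FIN X"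
proof -
  have "bm b w \<noteq> []" using FIN_ne[OF assms(2)] bm_ne by blast
  moreover have "sorted_wrt (<) (map fst (bm b w))" using FIN_sorted[OF assms(2)] map_fst_bm by metis
  moreover have "\<forall>(m, x)\<in>set (bm b w). x \<in> X m"
    using assms act_closed[OF SomeJ[OF assms(1)]] FIN_mem unfolding set_bm by fastforce
  ultimately show ?thesis unfolding FIN_def by blast
qed

lemma bm_Z: assumes "b \<in> B" "w \<in> FIN X" shows "bm b w \<in> Zs"
proof -
  have "\<forall>(m, z)\<in>set (bm b w). \<forall>a\<in>Jcarrier B. act m a z = z"
    using assms act_fixed[OF assms(1)] FIN_mem unfolding set_bm by fastforce
  then show ?thesis using bm_FIN[OF assms] unfolding Zs_def by blast
qed

lemma bm_on_Z: assumes "b \<in> B" "w \<in> Zs" shows "bm b w = w"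
proof -
  have "\<forall>(m, z)\<in>set w. act m (Some b) z = z" using assms SomeJ unfolding Zs_def by blast
  then show ?thesis unfolding bm_def wact_def by (induction w) auto
qed

lemma pdef_bm:
  assumes "b \<in> B" "x \<in> FIN X" "y \<in> FIN X"
  shows "pdefined X (bm b x) (bm b y) \<longleftrightarrow> pdefined X x y"
  using assms bm_FIN[OF assms(1)] last_bm[OF FIN_ne[OF assms(2)]] hd_bm[OF FIN_ne[OF assms(3)]]
  unfolding pdefined_def by auto

lemma bU_gS: assumes b: "b \<in> B" and U: "U \<in> gS" shows "bU b U \<in> gS"
proof -
  have uU: "ultra U" using gS_ultra[OF U] .
  have "ultra (bU b U)" unfolding ultra_def
  proof (intro conjI allI impI)
    fix S T assume ST: "S \<in> bU b U \<and> S \<subseteq> T"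
    then have "{w. bm b w \<in> S} \<in> U" by (simp add: bU_def)
    moreover have "{w. bm b w \<in> S} \<subseteq> {w. bm b w \<in> T}" using ST by blast
    ultimately have "{w. bm b w \<in> T} \<in> U" using ultra_up[OF uU] by blast
    then show "T \<in> bU b U" by (simp add: bU_def)
  next
    fix S T assume ST: "S \<in> bU b U \<and> T \<in> bU b U"
    then have "{w. bm b w \<in> S} \<in> U" "{w. bm b w \<in> T} \<in> U" by (simp_all add: bU_def)
    then have "{w. bm b w \<in> S} \<inter> {w. bm b w \<in> T} \<in> U" using ultra_int[OF uU] by blast
    moreover have "{w. bm b w \<in> S} \<inter> {w. bm b w \<in> T} = {w. bm b w \<in> S \<inter> T}" by blast
    ultimately show "S \<inter> T \<in> bU b U" by (simp add: bU_def)
  next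
    show "{} \<notin> bU b U" using ultra_empty[OF uU] by (simp add: bU_def)
  next
    fix S
    show "S \<in> bU b U \<or> - S \<in> bU b U"
    proof (cases "S \<in> bU b U")
      case True then show ?thesis by blast
    next
      case False
      then have "{w. bm b w \<in> S} \<notin> U" by (simp add: bU_def)
      then have "- {w. bm b w \<in> S} \<in> U" by (rule ultra_compl[OF uU])
      moreover have "- {w. bm b w \<in> S} = {w. bm b w \<in> - S}" by blast
      ultimately show ?thesis by (simp add: bU_def)
    qed
  qed
  moreover have "tailS N \<in> bU b U" for N
  proof -
    have "tailS N \<subseteq> {w. bm b w \<in> tailS N}"
    proof
      fix w assume w: "w \<in> tailS N"
      then have wF: "w \<in> FIN X" using tail_FIN by blast
      then show "w \<in> {w. bm b w \<in> tailS N}"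
        using w bm_FIN[OF b wF] hd_bm[OF FIN_ne[OF wF]] unfolding tailS_def by simp
    qed
    then have "{w. bm b w \<in> tailS N} \<in> U" using gS_tail[OF U] ultra_up[OF uU] by blast
    then show ?thesis by (simp add: bU_def)
  qed
  ultimately show ?thesis unfolding gS_def by blast
qed

lemma bU_Z: assumes b: "b \<in> B" and U: "U \<in> gS" shows "Zs \<in> bU b U"
proof -
  have "FIN X \<subseteq> {w. bm b w \<in> Zs}" using bm_Z[OF b] by blast
  then have "{w. bm b w \<in> Zs} \<in> U" using gS_FIN[OF U] ultra_up[OF gS_ultra[OF U]] by blast
  then show ?thesis by (simp add: bU_def)
qed

lemma bU_fix: assumes b: "b \<in> B" and F: "F \<in> gS" "Zs \<in> F" shows "bU b F = F"
proof (rule set_eqI)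
  fix A
  have "{w. bm b w \<in> A} \<inter> Zs = A \<inter> Zs" using bm_on_Z[OF b] by auto
  then have "{w. bm b w \<in> A} \<in> F \<longleftrightarrow> A \<in> F" using ultra_cong[OF gS_ultra[OF F(1)] F(2)] by blast
  then show "A \<in> bU b F \<longleftrightarrow> A \<in> F" by (simp add: bU_def)
qed

lemma bU_hom:
  assumes b: "b \<in> B" and U: "U \<in> gS" and V: "V \<in> gS"
  shows "bU b (mu U V) = mu (bU b U) (bU b V)"
proof (rule set_eqI)
  fix A
  have uU: "ultra U" and uV: "ultra V" using U V gS_ultra by auto
  have inner: "{y. pdefined X x y \<and> bm b (x @ y) \<in> A} \<in> V \<longleftrightarrow> {y. bm b y \<in> dv X A (bm b x)} \<in> V"
    if x: "x \<in> FIN X" for x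
  proof -
    have "{y. pdefined X x y \<and> bm b (x @ y) \<in> A} \<inter> FIN X = {y. bm b y \<in> dv X A (bm b x)} \<inter> FIN X"
      using pdef_bm[OF b x] bm_app[of b x] unfolding dv_def by auto
    then show ?thesis using ultra_cong[OF uV gS_FIN[OF V]] by blast
  qed
  have "{x. {y. pdefined X x y \<and> bm b (x @ y) \<in> A} \<in> V} \<inter> FIN X
      = {x. {y. bm b y \<in> dv X A (bm b x)} \<in> V} \<inter> FIN X"
    using inner by blast
  then have eq: "{x. {y. pdefined X x y \<and> bm b (x @ y) \<in> A} \<in> V} \<in> U \<longleftrightarrow>
      {x. {y. bm b y \<in> dv X A (bm b x)} \<in> V} \<in> U"
    using ultra_cong[OF uU gS_FIN[OF U]] by blast
  have l: "A \<in> bU b (mu U V) \<longleftrightarrow> {x. {y. pdefined X x y \<and> bm b (x @ y) \<in> A} \<in> V} \<in> U"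
    unfolding bU_def mu_def dv_def by simp
  have r: "A \<in> mu (bU b U) (bU b V) \<longleftrightarrow> {x. {y. bm b y \<in> dv X A (bm b x)} \<in> V} \<in> U"
    unfolding bU_def mu_def by simp
  show "A \<in> bU b (mu U V) \<longleftrightarrow> A \<in> mu (bU b U) (bU b V)" using l r eq by simp
qed

lemma exists_gS:
  assumes S: "S \<subseteq> FIN X" and big: "\<And>N. \<exists>w\<in>S. N < fst (hd w)"
  shows "\<exists>U\<in>gS. S \<in> U"
proof -
  have "fip (insert S (range tailS))" unfolding fip_def
  proof (intro allI impI)
    fix Q assume Q: "finite Q \<and> Q \<subseteq> insert S (range tailS)"
    then have "Q - {S} \<subseteq> tailS ` UNIV" by blast
    then obtain N0 where N0: "finite N0" "Q - {S} = tailS ` N0"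
      using Q by (metis finite_Diff finite_subset_image subset_UNIV)
    let ?N = "Max (insert 0 N0)"
    obtain w where w: "w \<in> S" "?N < fst (hd w)" using big by blast
    have "w \<in> tailS n" if "n \<in> N0" for n
    proof -
      have "n \<le> ?N" using that N0(1) by simp
      then show ?thesis using w S unfolding tailS_def by auto
    qed
    then have "w \<in> \<Inter>Q" using w(1) N0(2) by blast
    then show "\<Inter>Q \<noteq> {}" by blast
  qed
  then obtain W where W: "ultra W" "insert S (range tailS) \<subseteq> W" using ultrafilter_exists by blast
  then have "W \<in> gS" unfolding gS_def by blast
  then show ?thesis using W by blast
qed

lemma E_FIN: "E \<subseteq> FIN X" using ri unfolding right_ideal_def by blast

lemma single_FIN: "[(N, p N)] \<in> FIN X"
  unfolding FIN_def using p_in by simp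

lemma E_big: "\<exists>u\<in>E. N < fst (hd u)"
proof -
  obtain u where "u \<in> E" "pdefined X [(N, p N)] u"
    using ed single_FIN unfolding E_directed_def by (metis empty_subsetI finite.emptyI finite_insert insert_subset singletonI)
  then show ?thesis unfolding pdefined_def by auto
qed

lemma Y_big: "\<exists>u\<in>Ys. N < fst (hd u)"
  using single_FIN[of "Suc N"] unfolding Ys_def by (intro bexI[of _ "[(Suc N, p (Suc N))]"]) auto

lemma fixpt: "\<exists>z\<in>X m. \<forall>a\<in>Jcarrier B. act m a z = z"
proof (cases "B = {}")
  case True
  then have "Jcarrier B = {None}" unfolding Jcarrier_def by simp
  moreover have "act m None (p m) = p m"
  proof -
    have "is_J_action B (X m) (act m)" using pt[of m] unfolding pointed_J_set_def by blast
    then have "\<forall>x\<in>X m. act m None x = x" unfolding is_J_action_def by blast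
    then show ?thesis using p_in by blast
  qed
  ultimately have "\<forall>a\<in>Jcarrier B. act m a (p m) = p m" by simp
  then show ?thesis using p_in by blast
next
  case False
  then obtain b where b: "b \<in> B" by blast
  have "\<forall>a\<in>Jcarrier B. act m a (act m (Some b) (p m)) = act m (Some b) (p m)"
    using act_fixed[OF b _ p_in] by blast
  moreover have "act m (Some b) (p m) \<in> X m" using act_closed[OF SomeJ[OF b] p_in] .
  ultimately show ?thesis by blast
qed

lemma Z_big: "\<exists>u\<in>Zs. N < fst (hd u)"
proof -
  obtain z where z: "z \<in> X (Suc N)" "\<forall>a\<in>Jcarrier B. act (Suc N) a z = z" using fixpt by blast
  then have "[(Suc N, z)] \<in> Zs" unfolding Zs_def FIN_def by simp
  moreover have "N < fst (hd [(Suc N, z)])" by simp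
  ultimately show ?thesis by blast
qed

lemma Ys_right: assumes U: "U \<in> gS" "Ys \<in> U" and V: "V \<in> gS" shows "Ys \<in> mu U V"
proof -
  have "Ys \<subseteq> {w. dv X Ys w \<in> V}"
  proof
    fix w assume w: "w \<in> Ys"
    then have wF: "w \<in> FIN X" unfolding Ys_def by blast
    have "{u. pdefined X w u} \<subseteq> dv X Ys w"
      using w pdef_app unfolding dv_def Ys_def by fastforce
    then show "w \<in> {w. dv X Ys w \<in> V}" using gS_pdef[OF V wF] ultra_up[OF gS_ultra[OF V]] by blast
  qed
  then have "{w. dv X Ys w \<in> V} \<in> U" using U ultra_up[OF gS_ultra[OF U(1)]] by blast
  then show ?thesis by (simp add: mu_def)
qed

lemma Ys_left: assumes U: "U \<in> gS" "Ys \<in> U" and V: "V \<in> gS" shows "Ys \<in> mu V U"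
proof -
  have "FIN X \<subseteq> {w. dv X Ys w \<in> U}"
  proof
    fix w assume wF: "w \<in> FIN X"
    have "Ys \<inter> {u. pdefined X w u} \<subseteq> dv X Ys w"
      using pdef_app unfolding dv_def Ys_def by fastforce
    moreover have "Ys \<inter> {u. pdefined X w u} \<in> U" using ultra_int[OF gS_ultra[OF U(1)] U(2) gS_pdef[OF U(1) wF]] .
    ultimately show "w \<in> {w. dv X Ys w \<in> U}" using ultra_up[OF gS_ultra[OF U(1)]] by blast
  qed
  then have "{w. dv X Ys w \<in> U} \<in> V" using gS_FIN[OF V] ultra_up[OF gS_ultra[OF V]] by blast
  then show ?thesis by (simp add: mu_def)
qed

lemma E_right: assumes U: "U \<in> gS" "E \<in> U" and V: "V \<in> gS" shows "E \<in> mu U V"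
proof -
  have "E \<subseteq> {w. dv X E w \<in> V}"
  proof
    fix w assume w: "w \<in> E"
    then have wF: "w \<in> FIN X" using E_FIN by blast
    have "{u. pdefined X w u} \<subseteq> dv X E w"
      using w ri unfolding dv_def right_ideal_def by blast
    then show "w \<in> {w. dv X E w \<in> V}" using gS_pdef[OF V wF] ultra_up[OF gS_ultra[OF V]] by blast
  qed
  then have "{w. dv X E w \<in> V} \<in> U" using U ultra_up[OF gS_ultra[OF U(1)]] by blast
  then show ?thesis by (simp add: mu_def)
qed

lemma Zs_mul: assumes U: "U \<in> gS" "Zs \<in> U" and V: "V \<in> gS" "Zs \<in> V" shows "Zs \<in> mu U V"
proof -
  have "Zs \<subseteq> {w. dv X Zs w \<in> V}"
  proof
    fix w assume w: "w \<in> Zs"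
    then have wF: "w \<in> FIN X" unfolding Zs_def by blast
    have "Zs \<inter> {u. pdefined X w u} \<subseteq> dv X Zs w"
      using w pdef_app unfolding dv_def Zs_def by fastforce
    moreover have "Zs \<inter> {u. pdefined X w u} \<in> V" using ultra_int[OF gS_ultra[OF V(1)] V(2) gS_pdef[OF V(1) wF]] .
    ultimately show "w \<in> {w. dv X Zs w \<in> V}" using ultra_up[OF gS_ultra[OF V(1)]] by blast
  qed
  then have "{w. dv X Zs w \<in> V} \<in> U" using U ultra_up[OF gS_ultra[OF U(1)]] by blast
  then show ?thesis by (simp add: mu_def)
qed

end



context jset
begin

lemma key_ultra:
  "\<exists>F U U'. F \<in> gS \<and> U \<in> gS \<and> U' \<in> gS \<and> Ys \<in> U \<and> E \<in> U'
     \<and> (\<forall>b\<in>B. bU b U = F) \<and> (\<forall>b\<in>B. mu F (mu (bU b U') F) = F)"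
proof -
  let ?T = "{U \<in> gS. Zs \<in> U}"
  have T1: "closedS ?T" using closed_basic .
  have "Zs \<subseteq> FIN X" unfolding Zs_def by blast
  then obtain Z0 where "Z0 \<in> gS" "Zs \<in> Z0" using exists_gS Z_big by blast
  then have T2: "?T \<noteq> {}" by blast
  have T3: "semigrp ?T" unfolding semigrp_def
  proof (intro ballI)
    fix a b assume "a \<in> ?T" "b \<in> ?T"
    then have "a \<in> gS" "Zs \<in> a" "b \<in> gS" "Zs \<in> b" by auto
    then show "mu a b \<in> ?T" using Zs_mul mu_gS by simp
  qed
  from min_lideal[OF T1 T2 T3] obtain L where L: "lideal ?T L" "closedS L" "L \<noteq> {}"
    and Lid0: "\<forall>x\<in>L. \<forall>e\<in>L. mu e e = e \<longrightarrow> mu x e = x" by (elim exE conjE)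
  have Lid: "mu x e = x" if "x \<in> L" "e \<in> L" "mu e e = e" for x e using Lid0 that by blast
  have LT: "L \<subseteq> ?T" using L(1) unfolding lideal_def by blast
  have Lmul: "\<And>t l. t \<in> ?T \<Longrightarrow> l \<in> L \<Longrightarrow> mu t l \<in> L" using L(1) unfolding lideal_def by blast
  have "semigrp L" unfolding semigrp_def
  proof (intro ballI)
    fix a b assume "a \<in> L" "b \<in> L"
    then show "mu a b \<in> L" using Lmul[of a b] LT by blast
  qed
  then obtain F where FL: "F \<in> L" and FF: "mu F F = F" using ellis[OF L(2) L(3)] by blast
  have Fg: "F \<in> gS" and FZ: "Zs \<in> F" using FL LT by auto
  have "Ys \<subseteq> FIN X" unfolding Ys_def by blast
  then obtain y0 where y0: "y0 \<in> gS" "Ys \<in> y0" using exists_gS Y_big by blast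
  define q where "q = mu y0 F"
  have qg: "q \<in> gS" unfolding q_def using mu_gS[OF y0(1) Fg] .
  have qY: "Ys \<in> q" unfolding q_def using Ys_right[OF y0 Fg] .
  have qF: "mu q F = q" unfolding q_def using mu_assoc[OF Fg, of y0 F] FF by simp
  let ?C1 = "(\<lambda>V. mu V q) ` gS"
  have C1a: "closedS ?C1" using closed_mul_right[OF closed_gS qg] .
  have C1b: "?C1 \<noteq> {}" using y0 by blast
  have C1c: "semigrp ?C1" unfolding semigrp_def
  proof (intro ballI)
    fix a b assume "a \<in> ?C1" "b \<in> ?C1"
    then obtain a' b' where ab: "a' \<in> gS" "b' \<in> gS" "a = mu a' q" "b = mu b' q" by blast
    have ag: "a \<in> gS" using ab mu_gS qg by blast
    have "mu a b = mu (mu a b') q" using mu_assoc[OF qg, of a b'] ab by simp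
    moreover have "mu a b' \<in> gS" using mu_gS[OF ag ab(2)] .
    ultimately show "mu a b \<in> ?C1" by blast
  qed
  obtain V where VC: "V \<in> ?C1" and VV: "mu V V = V" using ellis[OF C1a C1b C1c] by blast
  then obtain a where a: "a \<in> gS" "V = mu a q" by blast
  have Vg: "V \<in> gS" using a mu_gS qg by blast
  have VF: "mu V F = V" using a mu_assoc[OF Fg, of a q] qF by simp
  have VY: "Ys \<in> V" using a Ys_left[OF qg qY a(1)] by simp
  define U where "U = mu F V"
  have Ug: "U \<in> gS" unfolding U_def using mu_gS[OF Fg Vg] .
  have UY: "Ys \<in> U" unfolding U_def using Ys_left[OF Vg VY Fg] .
  have UU: "mu U U = U"
  proof -
    have "mu U U = mu F (mu V (mu F V))" unfolding U_def using mu_assoc[OF Ug[unfolded U_def], of F V] by simp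
    also have "mu V (mu F V) = mu (mu V F) V" using mu_assoc[OF Vg, of V F] by simp
    also have "\<dots> = V" using VF VV by simp
    finally show ?thesis unfolding U_def .
  qed
  have FU: "mu F U = U" unfolding U_def using mu_assoc[OF Vg, of F F] FF by simp
  have UF: "mu U F = U" unfolding U_def using mu_assoc[OF Fg, of F V] VF by simp
  have bUF: "bU b U = F" if b: "b \<in> B" for b
  proof -
    let ?Fb = "bU b U"
    have Fbg: "?Fb \<in> gS" using bU_gS[OF b Ug] .
    have FbT: "?Fb \<in> ?T" using Fbg bU_Z[OF b Ug] by blast
    have bF: "bU b F = F" using bU_fix[OF b Fg FZ] .
    have idem: "mu ?Fb ?Fb = ?Fb" using bU_hom[OF b Ug Ug] UU by simp
    have "?Fb = mu ?Fb F" using bU_hom[OF b Ug Fg] UF bF by simp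
    then have FbL: "?Fb \<in> L" using Lmul[OF FbT FL] by simp
    have "mu F ?Fb = ?Fb" using bU_hom[OF b Fg Ug] FU bF by simp
    moreover have "mu F ?Fb = F" using Lid[OF FL FbL idem] .
    ultimately show ?thesis by simp
  qed
  obtain e0 where e0: "e0 \<in> gS" "E \<in> e0" using exists_gS[OF E_FIN] E_big by blast
  let ?C2 = "{W \<in> gS. E \<in> W} \<inter> (\<lambda>V. mu V F) ` gS"
  have C2a: "closedS ?C2" using closed_Int[OF closed_basic closed_mul_right[OF closed_gS Fg]] .
  have "mu e0 F \<in> ?C2" using mu_gS[OF e0(1) Fg] E_right[OF e0 Fg] e0(1) by blast
  then have C2b: "?C2 \<noteq> {}" by blast
  have C2c: "semigrp ?C2" unfolding semigrp_def
  proof (intro ballI)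
    fix a b assume A: "a \<in> ?C2" "b \<in> ?C2"
    then obtain b' where b': "b' \<in> gS" "b = mu b' F" by blast
    have ag: "a \<in> gS" "E \<in> a" using A by auto
    have "mu a b = mu (mu a b') F" using mu_assoc[OF Fg, of a b'] b' by simp
    moreover have "mu a b' \<in> gS" using mu_gS[OF ag(1) b'(1)] .
    moreover have "mu a b \<in> gS" using mu_gS[OF ag(1)] A by blast
    moreover have "E \<in> mu a b" using E_right[OF ag] A by blast
    ultimately show "mu a b \<in> ?C2" by blast
  qed
  obtain U' where U'C: "U' \<in> ?C2" and UU': "mu U' U' = U'" using ellis[OF C2a C2b C2c] by blast
  have U'g: "U' \<in> gS" and U'E: "E \<in> U'" using U'C by auto
  obtain a' where a': "a' \<in> gS" "U' = mu a' F" using U'C by blast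
  have U'F: "mu U' F = U'" using a' mu_assoc[OF Fg, of a' F] FF by simp
  have bU': "mu F (mu (bU b U') F) = F" if b: "b \<in> B" for b
  proof -
    let ?G = "bU b U'"
    have Gg: "?G \<in> gS" using bU_gS[OF b U'g] .
    have GT: "?G \<in> ?T" using Gg bU_Z[OF b U'g] by blast
    have bF: "bU b F = F" using bU_fix[OF b Fg FZ] .
    have idem: "mu ?G ?G = ?G" using bU_hom[OF b U'g U'g] UU' by simp
    have GF: "mu ?G F = ?G" using bU_hom[OF b U'g Fg] U'F bF by simp
    then have GL: "?G \<in> L" using Lmul[OF GT FL] by metis
    have "mu F ?G = F" using Lid[OF FL GL idem] .
    then show ?thesis using GF by simp
  qed
  show ?thesis using Fg Ug U'g UY U'E bUF bU' by blast
qed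

end



lemma prodl_concat:
  "ws \<noteq> [] \<Longrightarrow> (\<forall>w\<in>set ws. w \<in> FIN X) \<Longrightarrow> sorted_wrt (\<lambda>a b. fst (last a) < fst (hd b)) ws \<Longrightarrow>
   prodl X ws = Some (concat ws) \<and> concat ws \<in> FIN X \<and> hd (concat ws) = hd (hd ws)"
proof (induction X ws rule: prodl.induct)
  case (1 X) then show ?case by simp
next
  case (2 X w) then show ?case by simp
next
  case (3 X w v ws)
  have IH: "prodl X (v # ws) = Some (concat (v # ws)) \<and> concat (v # ws) \<in> FIN X \<and> hd (concat (v # ws)) = hd v"
    using 3 by simp
  let ?u = "concat (v # ws)"
  have wF: "w \<in> FIN X" using "3.prems" by simp
  have vF: "v \<in> FIN X" using "3.prems" by simp
  have "fst (last w) < fst (hd v)" using "3.prems"(3) by simp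
  then have pd: "pdefined X w ?u" using IH wF unfolding pdefined_def by simp
  have "prodl X (w # v # ws) = Some (w @ ?u)" using IH pd by simp
  moreover have "w @ ?u \<in> FIN X" using pdef_app[OF pd] .
  moreover have "hd (w @ ?u) = w'" if "w' = hd w" for w' using pdef_hd[OF pd] that by simp
  ultimately show ?case by simp
qed

locale constr = jset B X act p E
  for B :: "'b set" and X :: "nat \<Rightarrow> 'x set" and act and p and E +
  fixes F U U' :: "'x word set set" and A :: "'x word set"
  assumes Fg: "F \<in> gS" and Ug: "U \<in> gS" and U'g: "U' \<in> gS"
    and UY: "Ys \<in> U" and U'E: "E \<in> U'"
    and bUF: "\<And>b. b \<in> B \<Longrightarrow> bU b U = F"
    and FGF: "\<And>b. b \<in> B \<Longrightarrow> mu F (mu (bU b U') F) = F"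
    and AF: "A \<in> F"
begin

definition sharp :: "'x word set \<Rightarrow> 'x word set" where
  "sharp S = {z \<in> S. \<forall>b'\<in>B. dv X S z \<in> mu (bU b' U') F}"

definition goodV :: "nat \<Rightarrow> 'x word set set \<Rightarrow> 'x word \<Rightarrow> bool" where
  "goodV N Fs x \<longleftrightarrow> x \<in> Ys \<and> x \<in> tailS N \<and> (\<forall>b\<in>B. \<forall>S\<in>Fs. bm b x \<in> sharp S)"

definition goodW :: "nat \<Rightarrow> 'x word set set \<Rightarrow> 'x word \<Rightarrow> bool" where
  "goodW N Gs y \<longleftrightarrow> y \<in> E \<and> y \<in> tailS N \<and> (\<forall>b\<in>B. \<forall>T\<in>Gs. dv X T (bm b y) \<in> F)"

definition stepf :: "nat \<Rightarrow> 'x word \<times> 'x word set set \<times> 'x word set set \<Rightarrow> 'x word \<times> 'x word set set \<times> 'x word set set" where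
  "stepf k st = (if even k then
      (let x = (SOME x. goodV (fst (last (fst st))) (fst (snd st)) x) in
        (x, fst (snd st), snd (snd st) \<union> (\<lambda>(S, b). dv X S (bm b x)) ` (fst (snd st) \<times> B)))
    else
      (let y = (SOME y. goodW (fst (last (fst st))) (snd (snd st)) y) in
        (y, fst (snd st) \<union> (\<lambda>(T, b). dv X T (bm b y)) ` (snd (snd st) \<times> B), snd (snd st))))"

primrec st :: "nat \<Rightarrow> 'x word \<times> 'x word set set \<times> 'x word set set" where
  "st 0 = ([], {A}, {})"
| "st (Suc k) = stepf k (st k)"

definition Fs :: "nat \<Rightarrow> 'x word set set" where "Fs k = fst (snd (st k))"
definition Gs :: "nat \<Rightarrow> 'x word set set" where "Gs k = snd (snd (st k))"
definition sq :: "nat \<Rightarrow> 'x word" where "sq k = fst (st (Suc k))"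
definition prev :: "nat \<Rightarrow> 'x word" where "prev k = fst (st k)"

definition Inv :: "nat \<Rightarrow> bool" where
  "Inv k \<longleftrightarrow> finite (Fs k) \<and> finite (Gs k) \<and> (\<forall>S\<in>Fs k. S \<in> F) \<and> (\<forall>T\<in>Gs k. \<forall>b\<in>B. T \<in> mu (bU b U') F)"

lemma uF: "ultra F" using gS_ultra[OF Fg] .
lemma uU: "ultra U" using gS_ultra[OF Ug] .
lemma uU': "ultra U'" using gS_ultra[OF U'g] .

lemma sharp_in: assumes "S \<in> F" shows "sharp S \<in> F"
proof -
  have "{z. dv X S z \<in> mu (bU b' U') F} \<in> F" if b': "b' \<in> B" for b'
  proof -
    have "S \<in> mu F (mu (bU b' U') F)" using FGF[OF b'] assms by simp
    then show ?thesis by (simp add: mu_def)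
  qed
  then have "{z. \<forall>b'\<in>B. z \<in> {z. dv X S z \<in> mu (bU b' U') F}} \<in> F"
    using ultra_finite_Inter[OF uF finB, where f="\<lambda>b'. {z. dv X S z \<in> mu (bU b' U') F}"] by blast
  then have "S \<inter> {z. \<forall>b'\<in>B. z \<in> {z. dv X S z \<in> mu (bU b' U') F}} \<in> F"
    using ultra_int[OF uF assms] by blast
  moreover have "S \<inter> {z. \<forall>b'\<in>B. z \<in> {z. dv X S z \<in> mu (bU b' U') F}} = sharp S"
    unfolding sharp_def by blast
  ultimately show ?thesis by simp
qed

lemma goodV_ex:
  assumes "finite Fs0" "\<forall>S\<in>Fs0. S \<in> F"
  shows "\<exists>x. goodV N Fs0 x"
proof -
  have fin: "finite (B \<times> Fs0)" using finB assms(1) by simp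
  have "(\<lambda>(b, S). {x. bm b x \<in> sharp S}) bS \<in> U" if bS0: "bS \<in> B \<times> Fs0" for bS
  proof -
    obtain b S where bS: "bS = (b, S)" "b \<in> B" "S \<in> Fs0" using bS0 by blast
    have "sharp S \<in> bU b U" using sharp_in assms(2) bS bUF by simp
    then show ?thesis using bS by (simp add: bU_def)
  qed
  then have "{x. \<forall>bS\<in>B \<times> Fs0. x \<in> (\<lambda>(b, S). {x. bm b x \<in> sharp S}) bS} \<in> U"
    using ultra_finite_Inter[OF uU fin, where f="\<lambda>(b, S). {x. bm b x \<in> sharp S}"] by blast
  moreover have "Ys \<inter> tailS N \<in> U" using ultra_int[OF uU UY gS_tail[OF Ug]] .
  ultimately have "Ys \<inter> tailS N \<inter> {x. \<forall>bS\<in>B \<times> Fs0. x \<in> (\<lambda>(b, S). {x. bm b x \<in> sharp S}) bS} \<in> U"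
    using ultra_int[OF uU] by blast
  then obtain x where "x \<in> Ys \<inter> tailS N \<inter> {x. \<forall>bS\<in>B \<times> Fs0. x \<in> (\<lambda>(b, S). {x. bm b x \<in> sharp S}) bS}"
    using ultra_ne[OF uU] by blast
  then have "goodV N Fs0 x" unfolding goodV_def by auto
  then show ?thesis by blast
qed

lemma goodW_ex:
  assumes "finite Gs0" "\<forall>T\<in>Gs0. \<forall>b\<in>B. T \<in> mu (bU b U') F"
  shows "\<exists>y. goodW N Gs0 y"
proof -
  have fin: "finite (B \<times> Gs0)" using finB assms(1) by simp
  have "(\<lambda>(b, T). {y. dv X T (bm b y) \<in> F}) bT \<in> U'" if bT0: "bT \<in> B \<times> Gs0" for bT
  proof -
    obtain b T where bT: "bT = (b, T)" "b \<in> B" "T \<in> Gs0" using bT0 by blast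
    have "T \<in> mu (bU b U') F" using assms(2) bT by blast
    then have "{z. dv X T z \<in> F} \<in> bU b U'" by (simp add: mu_def)
    then show ?thesis using bT by (simp add: bU_def)
  qed
  then have "{y. \<forall>bT\<in>B \<times> Gs0. y \<in> (\<lambda>(b, T). {y. dv X T (bm b y) \<in> F}) bT} \<in> U'"
    using ultra_finite_Inter[OF uU' fin, where f="\<lambda>(b, T). {y. dv X T (bm b y) \<in> F}"] by blast
  moreover have "E \<inter> tailS N \<in> U'" using ultra_int[OF uU' U'E gS_tail[OF U'g]] .
  ultimately have "E \<inter> tailS N \<inter> {y. \<forall>bT\<in>B \<times> Gs0. y \<in> (\<lambda>(b, T). {y. dv X T (bm b y) \<in> F}) bT} \<in> U'"
    using ultra_int[OF uU'] by blast
  then obtain y where "y \<in> E \<inter> tailS N \<inter> {y. \<forall>bT\<in>B \<times> Gs0. y \<in> (\<lambda>(b, T). {y. dv X T (bm b y) \<in> F}) bT}"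
    using ultra_ne[OF uU'] by blast
  then have "goodW N Gs0 y" unfolding goodW_def by auto
  then show ?thesis by blast
qed

lemma step_even:
  assumes "even k" "Inv k"
  shows "goodV (fst (last (prev k))) (Fs k) (sq k) \<and> Fs (Suc k) = Fs k
    \<and> Gs (Suc k) = Gs k \<union> (\<lambda>(S, b). dv X S (bm b (sq k))) ` (Fs k \<times> B) \<and> prev (Suc k) = sq k"
proof -
  obtain w F0 G0 where stk: "st k = (w, F0, G0)" by (cases "st k") auto
  define x where "x = (SOME x. goodV (fst (last w)) F0 x)"
  have "st (Suc k) = (x, F0, G0 \<union> (\<lambda>(S, b). dv X S (bm b x)) ` (F0 \<times> B))"
    using assms(1) stk unfolding x_def by (simp add: stepf_def Let_def)
  moreover have "Fs k = F0" "Gs k = G0" "prev k = w" using stk unfolding Fs_def Gs_def prev_def by simp_all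
  moreover have "\<exists>x. goodV (fst (last w)) F0 x" using goodV_ex assms(2) calculation(2) unfolding Inv_def by blast
  then have "goodV (fst (last w)) F0 x" unfolding x_def by (rule someI_ex)
  moreover note this
  ultimately show ?thesis unfolding sq_def Fs_def Gs_def prev_def by simp
qed

lemma step_odd:
  assumes "odd k" "Inv k"
  shows "goodW (fst (last (prev k))) (Gs k) (sq k) \<and> Gs (Suc k) = Gs k
    \<and> Fs (Suc k) = Fs k \<union> (\<lambda>(T, b). dv X T (bm b (sq k))) ` (Gs k \<times> B) \<and> prev (Suc k) = sq k"
proof -
  obtain w F0 G0 where stk: "st k = (w, F0, G0)" by (cases "st k") auto
  define y where "y = (SOME y. goodW (fst (last w)) G0 y)"
  have "st (Suc k) = (y, F0 \<union> (\<lambda>(T, b). dv X T (bm b y)) ` (G0 \<times> B), G0)"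
    using assms(1) stk unfolding y_def by (simp add: stepf_def Let_def)
  moreover have "Fs k = F0" "Gs k = G0" "prev k = w" using stk unfolding Fs_def Gs_def prev_def by simp_all
  moreover have "\<exists>y. goodW (fst (last w)) G0 y" using goodW_ex assms(2) calculation(3) unfolding Inv_def by blast
  then have "goodW (fst (last w)) G0 y" unfolding y_def by (rule someI_ex)
  moreover note this
  ultimately show ?thesis unfolding sq_def Fs_def Gs_def prev_def by simp
qed

lemma Inv_all: "Inv k"
proof (induction k)
  case 0
  show ?case using AF unfolding Inv_def Fs_def Gs_def by simp
next
  case (Suc k)
  show ?case
  proof (cases "even k")
    case True
    note s = step_even[OF True Suc.IH]
    have gv: "\<forall>b\<in>B. \<forall>S\<in>Fs k. bm b (sq k) \<in> sharp S" using s unfolding goodV_def by blast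
    have new: "\<forall>T\<in>(\<lambda>(S, b). dv X S (bm b (sq k))) ` (Fs k \<times> B). \<forall>b'\<in>B. T \<in> mu (bU b' U') F"
      using gv unfolding sharp_def by auto
    show ?thesis using Suc.IH s new finB unfolding Inv_def by auto
  next
    case False
    note s = step_odd[OF False Suc.IH]
    have gw: "\<forall>b\<in>B. \<forall>T\<in>Gs k. dv X T (bm b (sq k)) \<in> F" using s unfolding goodW_def by blast
    have new: "\<forall>S\<in>(\<lambda>(T, b). dv X T (bm b (sq k))) ` (Gs k \<times> B). S \<in> F"
      using gw by auto
    show ?thesis using Suc.IH s new finB unfolding Inv_def by auto
  qed
qed

lemma Fs_mono: "i \<le> j \<Longrightarrow> Fs i \<subseteq> Fs j"
proof (induction j)
  case 0 then show ?case by simp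
next
  case (Suc j)
  have "Fs j \<subseteq> Fs (Suc j)"
    using step_even[OF _ Inv_all, of j] step_odd[OF _ Inv_all, of j] by (cases "even j") auto
  then show ?case using Suc by (cases "i = Suc j") auto
qed

lemma Gs_mono: "i \<le> j \<Longrightarrow> Gs i \<subseteq> Gs j"
proof (induction j)
  case 0 then show ?case by simp
next
  case (Suc j)
  have "Gs j \<subseteq> Gs (Suc j)"
    using step_even[OF _ Inv_all, of j] step_odd[OF _ Inv_all, of j] by (cases "even j") auto
  then show ?case using Suc by (cases "i = Suc j") auto
qed

lemma A_Fs: "A \<in> Fs k"
  using Fs_mono[of 0 k] unfolding Fs_def by simp

lemma sq_tail: "sq k \<in> tailS (fst (last (prev k)))"
  using step_even[OF _ Inv_all, of k] step_odd[OF _ Inv_all, of k]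
  unfolding goodV_def goodW_def by (cases "even k") auto

lemma sq_FIN: "sq k \<in> FIN X"
  using sq_tail tail_FIN by blast

lemma sq_Y: "even k \<Longrightarrow> sq k \<in> Ys"
  using step_even[OF _ Inv_all, of k] unfolding goodV_def by blast

lemma sq_E: "odd k \<Longrightarrow> sq k \<in> E"
  using step_odd[OF _ Inv_all, of k] unfolding goodW_def by blast

lemma sq_chain: "fst (last (sq k)) < fst (hd (sq (Suc k)))"
proof -
  have "prev (Suc k) = sq k"
    using step_even[OF _ Inv_all, of k] step_odd[OF _ Inv_all, of k] by (cases "even k") auto
  then show ?thesis using sq_tail[of "Suc k"] unfolding tailS_def by simp
qed

lemma sq_lt: "k < k' \<Longrightarrow> fst (last (sq k)) < fst (hd (sq k'))"
proof (induction k')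
  case 0 then show ?case by simp
next
  case (Suc k')
  show ?case
  proof (cases "k = k'")
    case True then show ?thesis using sq_chain by simp
  next
    case False
    then have "fst (last (sq k)) < fst (hd (sq k'))" using Suc by simp
    also have "\<dots> \<le> fst (last (sq k'))" using FIN_hd_le_last[OF sq_FIN] .
    also have "\<dots> < fst (hd (sq (Suc k')))" using sq_chain .
    finally show ?thesis .
  qed
qed

lemma basic_sq: "basic X sq"
  unfolding basic_def
proof (intro allI impI)
  fix ks :: "nat list" assume ks: "ks \<noteq> [] \<and> sorted_wrt (<) ks"
  have "sorted_wrt (\<lambda>a b. fst (last a) < fst (hd b)) (map sq ks)"
    using ks sq_lt unfolding sorted_wrt_map by (metis (mono_tags, lifting) sorted_wrt_mono_rel)
  moreover have "\<forall>w\<in>set (map sq ks). w \<in> FIN X" using sq_FIN by auto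
  moreover have "map sq ks \<noteq> []" using ks by simp
  ultimately show "prodl X (map sq ks) \<noteq> None" using prodl_concat by blast
qed

end



context constr
begin

definition vv :: "nat \<Rightarrow> 'x word" where "vv i = sq (2 * i)"
definition vv' :: "nat \<Rightarrow> 'x word" where "vv' i = sq (2 * i + 1)"

lemma pw_0: "pattern_word act vv vv' 0 is js bs bs' = bm (bs 0) (vv (is 0))"
  unfolding pattern_word_def bm_def by simp

lemma pw_Suc: "pattern_word act vv vv' (Suc n) is js bs bs'
   = pattern_word act vv vv' n is js bs bs' @ (bm (bs' n) (vv' (js n)) @ bm (bs (Suc n)) (vv (is (Suc n))))"
  unfolding pattern_word_def bm_def by simp

lemma claim:
  assumes "\<forall>k\<le>n. bs k \<in> B" "\<forall>k<n. bs' k \<in> B" "\<forall>k<n. is k \<le> js k \<and> js k < is (Suc k)"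
  shows "pattern_word act vv vv' n is js bs bs' \<in> A
    \<and> dv X A (pattern_word act vv vv' n is js bs bs') \<in> Gs (Suc (2 * is n))"
  using assms
proof (induction n)
  case 0
  let ?i = "is 0" and ?b = "bs 0"
  have b: "?b \<in> B" using "0.prems"(1) by simp
  have ev: "even (2 * ?i)" by simp
  note s = step_even[OF ev Inv_all]
  have "bm ?b (sq (2 * ?i)) \<in> sharp A" using s b A_Fs unfolding goodV_def by blast
  then have in1: "bm ?b (vv ?i) \<in> A" unfolding sharp_def vv_def by blast
  have "dv X A (bm ?b (vv ?i)) \<in> Gs (Suc (2 * ?i))"
  proof -
    have "(A, ?b) \<in> Fs (2 * ?i) \<times> B" using A_Fs b by blast
    then have "(\<lambda>(S, b). dv X S (bm b (sq (2 * ?i)))) (A, ?b) \<in> Gs (Suc (2 * ?i))" using s by blast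
    then show ?thesis unfolding vv_def by simp
  qed
  then show ?case using in1 pw_0 by simp
next
  case (Suc n)
  let ?P = "pattern_word act vv vv' n is js bs bs'"
  let ?i = "is n" and ?j = "js n" and ?i' = "is (Suc n)" and ?b' = "bs' n" and ?b = "bs (Suc n)"
  have IH: "?P \<in> A \<and> dv X A ?P \<in> Gs (Suc (2 * ?i))" using Suc.IH Suc.prems by simp
  have b: "?b \<in> B" and b': "?b' \<in> B" using Suc.prems by auto
  have ij: "?i \<le> ?j" "?j < ?i'" using Suc.prems(3) by auto
  let ?y = "sq (2 * ?j + 1)" and ?x = "sq (2 * ?i')"
  let ?z = "bm ?b' ?y" and ?x' = "bm ?b ?x"
  have od: "odd (2 * ?j + 1)" by simp
  note so = step_odd[OF od Inv_all]
  have "dv X A ?P \<in> Gs (2 * ?j + 1)" using IH Gs_mono[of "Suc (2 * ?i)" "2 * ?j + 1"] ij by auto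
  then have "(dv X A ?P, ?b') \<in> Gs (2 * ?j + 1) \<times> B" using b' by blast
  then have "dv X (dv X A ?P) ?z \<in> Fs (Suc (2 * ?j + 1))" using so by force
  then have T'in: "dv X (dv X A ?P) ?z \<in> Fs (2 * ?i')" using Fs_mono[of "Suc (2 * ?j + 1)" "2 * ?i'"] ij by auto
  have ev: "even (2 * ?i')" by simp
  note se = step_even[OF ev Inv_all]
  have "?x' \<in> sharp (dv X (dv X A ?P) ?z)" using se b T'in unfolding goodV_def by blast
  then have xin: "?x' \<in> dv X (dv X A ?P) ?z" unfolding sharp_def by blast
  then have pd1: "pdefined X ?z ?x'" and "?z @ ?x' \<in> dv X A ?P" unfolding dv_def by auto
  then have pd2: "pdefined X ?P (?z @ ?x')" and inA: "?P @ (?z @ ?x') \<in> A" unfolding dv_def by auto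
  have PS: "pattern_word act vv vv' (Suc n) is js bs bs' = ?P @ (?z @ ?x')"
    unfolding pw_Suc vv_def vv'_def by simp
  have "(dv X (dv X A ?P) ?z, ?b) \<in> Fs (2 * ?i') \<times> B" using T'in b by blast
  then have "dv X (dv X (dv X A ?P) ?z) ?x' \<in> Gs (Suc (2 * ?i'))" using se by force
  moreover have "dv X (dv X (dv X A ?P) ?z) ?x' = dv X A (?P @ (?z @ ?x'))"
    using dv_dv[of X "dv X A ?P" ?z ?x'] dv_dv[of X A ?P "?z @ ?x'"] pd1 pd2 by simp
  ultimately show ?case using PS inA by simp
qed

lemma interleave_sq: "interleave vv vv' = sq"
proof
  fix k
  show "interleave vv vv' k = sq k"
  proof (cases "even k")
    case True
    then have "2 * (k div 2) = k" by simp
    then show ?thesis using True unfolding interleave_def vv_def by simp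
  next
    case False
    then have "2 * (k div 2) + 1 = k" by presburger
    then show ?thesis using False unfolding interleave_def vv'_def by simp
  qed
qed

lemma main:
  "basic_double X vv vv' \<and> (\<forall>i. \<exists>m. (m, p m) \<in> set (vv i)) \<and> (\<forall>i. vv' i \<in> E)
   \<and> (\<forall>n is js bs bs'. (\<forall>k\<le>n. bs k \<in> B) \<and> (\<forall>k<n. bs' k \<in> B)
           \<and> (\<forall>k<n. is k \<le> js k \<and> js k < is (Suc k))
           \<longrightarrow> pattern_word act vv vv' n is js bs bs' \<in> A)"
proof (intro conjI allI impI)
  show "basic_double X vv vv'" unfolding basic_double_def interleave_sq using basic_sq .
next
  fix i show "\<exists>m. (m, p m) \<in> set (vv i)" using sq_Y[of "2 * i"] unfolding vv_def Ys_def by simp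
next
  fix i show "vv' i \<in> E" using sq_E[of "2 * i + 1"] unfolding vv'_def by simp
next
  fix n :: nat and "is" js :: "nat \<Rightarrow> nat" and bs bs' :: "nat \<Rightarrow> 'b"
  assume "(\<forall>k\<le>n. bs k \<in> B) \<and> (\<forall>k<n. bs' k \<in> B) \<and> (\<forall>k<n. is k \<le> js k \<and> js k < is (Suc k))"
  then show "pattern_word act vv vv' n is js bs bs' \<in> A" using claim by blast
qed

end



theorem corollary4p4:
  fixes B :: "'b set"
    and X :: "nat \<Rightarrow> 'x set"
    and act :: "nat \<Rightarrow> 'b option \<Rightarrow> 'x \<Rightarrow> 'x"
    and p :: "nat \<Rightarrow> 'x"
    and E :: "'x word set"
    and c :: "'x word \<Rightarrow> nat"
    and r :: nat
  assumes "finite B"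
    and "\<And>n. pointed_J_set B (X n) (act n) (p n)"
    and "right_ideal X E"
    and "E_directed X E"
    and "\<And>w. w \<in> FIN X \<Longrightarrow> c w < r"
  shows "\<exists>v v'. basic_double X v v'
     \<and> (\<forall>i. \<exists>m. (m, p m) \<in> set (v i))
     \<and> (\<forall>i. v' i \<in> E)
     \<and> (\<exists>col. \<forall>n is js bs bs'.
           (\<forall>k\<le>n. bs k \<in> B) \<and> (\<forall>k<n. bs' k \<in> B)
           \<and> (\<forall>k<n. is k \<le> js k \<and> js k < is (Suc k))
           \<longrightarrow> c (pattern_word act v v' n is js bs bs') = col)"
proof -
  interpret J: jset B X act p E
    using assms(1-4) by unfold_locales
  obtain F U U' where FUU: "F \<in> J.gS" "U \<in> J.gS" "U' \<in> J.gS" "J.Ys \<in> U" "E \<in> U'"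
    "\<forall>b\<in>B. J.bU b U = F" "\<forall>b\<in>B. J.mu F (J.mu (J.bU b U') F) = F"
    using J.key_ultra by blast
  have uF: "ultra F" using J.gS_ultra[OF FUU(1)] .
  have "FIN X \<subseteq> {w. \<exists>i<r. w \<in> {w \<in> FIN X. c w = i}}" using assms(5) by blast
  then have "{w. \<exists>i<r. w \<in> {w \<in> FIN X. c w = i}} \<in> F" using ultra_up[OF uF J.gS_FIN[OF FUU(1)]] by blast
  then obtain col where "{w \<in> FIN X. c w = col} \<in> F"
    using ultra_finite_Union[OF uF, where f="\<lambda>i. {w \<in> FIN X. c w = i}"] by blast
  define A where "A = {w \<in> FIN X. c w = col}"
  have AF: "A \<in> F" unfolding A_def by fact
  interpret C: constr B X act p E F U U' A
    by unfold_locales (use FUU AF in auto)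
  have M: "basic_double X C.vv C.vv' \<and> (\<forall>i. \<exists>m. (m, p m) \<in> set (C.vv i)) \<and> (\<forall>i. C.vv' i \<in> E)
   \<and> (\<forall>n is js bs bs'. (\<forall>k\<le>n. bs k \<in> B) \<and> (\<forall>k<n. bs' k \<in> B)
           \<and> (\<forall>k<n. is k \<le> js k \<and> js k < is (Suc k))
           \<longrightarrow> pattern_word act C.vv C.vv' n is js bs bs' \<in> A)" using C.main .
  have "\<forall>n is js bs bs'.
           (\<forall>k\<le>n. bs k \<in> B) \<and> (\<forall>k<n. bs' k \<in> B)
           \<and> (\<forall>k<n. is k \<le> js k \<and> js k < is (Suc k))
           \<longrightarrow> c (pattern_word act C.vv C.vv' n is js bs bs') = col"
    using M unfolding A_def by blast
  then show ?thesis using M by blast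
qed


end
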